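(* Let $M$ be a term of the CCV $\lambda\mu$-calculus and let $[\![M]\!]$ be its CPS translation, computed from an arbitrary syntax-tree representative of $M$ (the representatives may differ in how the equality (E2) is used to bracket $\mu$ and $\mathsf{where}$). If $[\![M]\!]\to^* N$ by $\beta\eta$-reduction in the target calculus, then $M\to^*(N^{-1})^{\downarrow}$ in the CCV $\lambda\mu$-calculus.
   Context: CCV $\lambda\mu$-calculus. Ordinary variables $x,y,z,\dots$ and continuation variables $k,l,m,\dots$ form disjoint sets. Terms $M$ and jumps $J$ are given by $M ::= x \mid \lambda x.M \mid MM \mid (M\ \mathsf{where}\ x:=M) \mid \mu k.J$ and $J ::= [k]M \mid (J\ \mathsf{where}\ x:=M)$. (Here $(L\ \mathsf{where}\ x:=M)$ is the let-construct $\mathsf{let}\ x=M\ \mathsf{in}\ L$ written body-first.) $\lambda x$ binds $x$ in its body; in $(L\ \mathsf{where}\ x:=M)$ and $(J\ \mathsf{where}\ x:=M)$ the variable $x$ is bound with scope $L$ (resp. $J$) only; $\mu k$ binds $k$. Terms and jumps are identified up to $\alpha$-conversion and up to the congruence generated by: (E1) $(L\ \mathsf{where}\ x:=(M\ \mathsf{where}\ y:=N))=((L\ \mathsf{where}\ x:=M)\ \mathsf{where}\ y:=N)$ if $y$ is not free in $L$; (E2) $((\mu k.J)\ \mathsf{where}\ x:=M)=\mu k.(J\ \mathsf{where}\ x:=M)$ if $k$ is not free in $M$; (E3) $[k](L\ \mathsf{where}\ x:=M)=([k]L\ \mathsf{where}\ x:=M)$. A value $V$ is a variable or a $\lambda$-abstraction;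 other terms are non-values ($N$ below denotes a non-value). Reduction rules ($z$ fresh): (ad$_1$) $NM\to (zM\ \mathsf{where}\ z:=N)$; (ad$_2$) $VN\to (Vz\ \mathsf{where}\ z:=N)$; ($\beta_\lambda$) $(\lambda x.M)V\to (M\ \mathsf{where}\ x:=V)$; ($\beta_{let}$) $(M\ \mathsf{where}\ x:=V)\to M\{V/x\}$; ($\beta_\mu$) $(M\ \mathsf{where}\ x:=\mu k.J)\to \mu k.J\{[k]\square\mapsto[k](M\ \mathsf{where}\ x:=\square)\}$; ($\beta_{jmp}$) $[l]\mu k.J\to J\{l/k\}$; ($\eta_\lambda$) $\lambda x.Vx\to V$ ($x$ not free in $V$); ($\eta_{let}$) $(x\ \mathsf{where}\ x:=M)\to M$; ($\eta_\mu$) $\mu k.[k]M\to M$ ($k$ not free in $M$). Here $J\{[k]\square\mapsto[k](M\ \mathsf{where}\ x:=\square)\}$ replaces, recursively, each subjump $[k]Q$ of $J$ with $k$ free by $[k](M\ \mathsf{where}\ x:=Q)$ (capture-avoiding), and $J\{l/k\}$ replaces each such $[k]Q$ by $[l]Q$. $\to$ is the compatible closure of these rules, $\to^*$ its reflexive-transitive closure. Reduction by $\eta_\mu$ is called vertical; $M^{\downarrow}$ denotes the normal form of $M$ with respect to vertical reductions. Target calculus: a sorted $\lambda$-calculus with ordinary variables $x$ (sort $W$) and continuation variables $k$ (sort $K$): $T::=\lambda k.Q\mid WW$, $Q::=KW\mid TK$, $W::=x\mid\lambda x.T$, $K::=k\mid\lambda x.Q$, with ordinary $\beta\eta$-reduction.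 CPS translation: for a CCV term $M$ and a target continuation $K$, define $\langle M\rangle[K]$ and $\langle J\rangle$ by: $\langle V\rangle[K]=KV^*$; $\langle V_1V_2\rangle[K]=V_1^*V_2^*K$; $\langle VN\rangle[K]=\langle N\rangle[\lambda y.V^*yK]$; $\langle NV\rangle[K]=\langle N\rangle[\lambda x.xV^*K]$; $\langle N_1N_2\rangle[K]=\langle N_1\rangle[\lambda x.\langle N_2\rangle[\lambda y.xyK]]$; $\langle (L\ \mathsf{where}\ x:=M)\rangle[K]=\langle M\rangle[\lambda x.\langle L\rangle[K]]$ (renaming $x$ if it is free in $K$); $\langle\mu k.J\rangle[K]=(\lambda k.\langle J\rangle)K$; $\langle[k]M\rangle=\langle M\rangle[k]$; $\langle (J\ \mathsf{where}\ x:=M)\rangle=\langle M\rangle[\lambda x.\langle J\rangle]$; $x^*=x$; $(\lambda x.M)^*=\lambda x k.\langle M\rangle[k]$; $[\![M]\!]=\lambda k.\langle M\rangle[k]$ (fresh $x,y,k$ where introduced). Inverse translation from the target calculus to CCV: $(\lambda k.Q)^{-1}=\mu k.Q^{-1}$; $(W_1W_2)^{-1}=W_1^{-1}W_2^{-1}$; $(KW)^{-1}=K^{-1}[W^{-1}]$; $(TK)^{-1}=K^{-1}[T^{-1}]$; $x^{-1}=x$; $(\lambda x.T)^{-1}=\lambda x.T^{-1}$; $k^{-1}=[k]\square$; $(\lambda x.Q)^{-1}=(Q^{-1}\ \mathsf{where}\ x:=\square)$, where $K^{-1}$ is a jump with one hole $\square$ and $K^{-1}[M]$ fills the hole with $M$.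 *)

theory Defs
  imports Main
begin

text \<open>
  Ordinary variables and
  continuation variables live in two separate index spaces.
  CCV raw syntax trees: Lam binds ordinary index 0 in its body;
  Where L M (= L where x := M) binds ordinary index 0 in L only;
  Mu J binds continuation index 0 in J; JWhere J M binds ordinary index 0 in J only.
  alpha-conversion is built in by the de Bruijn representation.
\<close>

datatype trm = Var nat | Lam trm | App trm trm | Where trm trm | Mu jmp
and jmp = Jmp nat trm | JWhere jmp trm

definition lift :: "(nat \<Rightarrow> nat) \<Rightarrow> nat \<Rightarrow> nat" where
  "lift f n = (case n of 0 \<Rightarrow> 0 | Suc m \<Rightarrow> Suc (f m))"

fun is_val :: "trm \<Rightarrow> bool" where
  "is_val (Var _) = True"
| "is_val (Lam _) = True"
| "is_val _ = False"

fun ren :: "(nat \<Rightarrow> nat) \<Rightarrow> (nat \<Rightarrow> nat) \<Rightarrow> trm \<Rightarrow> trm"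
and renJ :: "(nat \<Rightarrow> nat) \<Rightarrow> (nat \<Rightarrow> nat) \<Rightarrow> jmp \<Rightarrow> jmp" where
  "ren f g (Var n) = Var (f n)"
| "ren f g (Lam M) = Lam (ren (lift f) g M)"
| "ren f g (App M N) = App (ren f g M) (ren f g N)"
| "ren f g (Where L M) = Where (ren (lift f) g L) (ren f g M)"
| "ren f g (Mu J) = Mu (renJ f (lift g) J)"
| "renJ f g (Jmp k M) = Jmp (g k) (ren f g M)"
| "renJ f g (JWhere J M) = JWhere (renJ (lift f) g J) (ren f g M)"

definition liftS :: "(nat \<Rightarrow> trm) \<Rightarrow> nat \<Rightarrow> trm" where
  "liftS \<sigma> n = (case n of 0 \<Rightarrow> Var 0 | Suc m \<Rightarrow> ren Suc id (\<sigma> m))"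

fun subst :: "(nat \<Rightarrow> trm) \<Rightarrow> trm \<Rightarrow> trm"
and substJ :: "(nat \<Rightarrow> trm) \<Rightarrow> jmp \<Rightarrow> jmp" where
  "subst \<sigma> (Var n) = \<sigma> n"
| "subst \<sigma> (Lam M) = Lam (subst (liftS \<sigma>) M)"
| "subst \<sigma> (App M N) = App (subst \<sigma> M) (subst \<sigma> N)"
| "subst \<sigma> (Where L M) = Where (subst (liftS \<sigma>) L) (subst \<sigma> M)"
| "subst \<sigma> (Mu J) = Mu (substJ (ren id Suc \<circ> \<sigma>) J)"
| "substJ \<sigma> (Jmp k M) = Jmp k (subst \<sigma> M)"
| "substJ \<sigma> (JWhere J M) = JWhere (substJ (liftS \<sigma>) J) (subst \<sigma> M)"

definition cons1 :: "trm \<Rightarrow> nat \<Rightarrow> trm" where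
  "cons1 V n = (case n of 0 \<Rightarrow> V | Suc m \<Rightarrow> Var m)"

text \<open>Structural substitution  J{[k]\<box> \<mapsto> [k](P where x := \<box>)}.
  P is the body with the where-bound variable x as ordinary index 0;
  k is the (current) index of the continuation variable.\<close>
fun ss :: "trm \<Rightarrow> nat \<Rightarrow> trm \<Rightarrow> trm"
and ssJ :: "trm \<Rightarrow> nat \<Rightarrow> jmp \<Rightarrow> jmp" where
  "ss P k (Var n) = Var n"
| "ss P k (Lam M) = Lam (ss (ren (lift Suc) id P) k M)"
| "ss P k (App M N) = App (ss P k M) (ss P k N)"
| "ss P k (Where L M) = Where (ss (ren (lift Suc) id P) k L) (ss P k M)"
| "ss P k (Mu J) = Mu (ssJ (ren id Suc P) (Suc k) J)"
| "ssJ P k (Jmp l Q) =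
     (if l = k then Jmp k (Where P (ss P k Q)) else Jmp l (ss P k Q))"
| "ssJ P k (JWhere J Q) = JWhere (ssJ (ren (lift Suc) id P) k J) (ss P k Q)"

definition kcons :: "nat \<Rightarrow> nat \<Rightarrow> nat" where
  "kcons l n = (case n of 0 \<Rightarrow> l | Suc m \<Rightarrow> m)"

inductive eqv :: "trm \<Rightarrow> trm \<Rightarrow> bool"
and eqvJ :: "jmp \<Rightarrow> jmp \<Rightarrow> bool" where
  E1: "eqv (Where L (Where M N)) (Where (Where (ren (lift Suc) id L) M) N)"
| E2: "eqv (Where (Mu J) M) (Mu (JWhere J (ren id Suc M)))"
| E3: "eqvJ (Jmp k (Where L M)) (JWhere (Jmp k L) M)"
| refl: "eqv M M"
| sym: "eqv M N \<Longrightarrow> eqv N M"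
| trans: "eqv M N \<Longrightarrow> eqv N P \<Longrightarrow> eqv M P"
| reflJ: "eqvJ J J"
| symJ: "eqvJ J J' \<Longrightarrow> eqvJ J' J"
| transJ: "eqvJ J J' \<Longrightarrow> eqvJ J' J'' \<Longrightarrow> eqvJ J J''"
| c_lam: "eqv M M' \<Longrightarrow> eqv (Lam M) (Lam M')"
| c_app1: "eqv M M' \<Longrightarrow> eqv (App M N) (App M' N)"
| c_app2: "eqv N N' \<Longrightarrow> eqv (App M N) (App M N')"
| c_wh1: "eqv M M' \<Longrightarrow> eqv (Where M N) (Where M' N)"
| c_wh2: "eqv N N' \<Longrightarrow> eqv (Where M N) (Where M N')"
| c_mu: "eqvJ J J' \<Longrightarrow> eqv (Mu J) (Mu J')"
| c_jmp: "eqv M M' \<Longrightarrow> eqvJ (Jmp k M) (Jmp k M')"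
| c_jwh1: "eqvJ J J' \<Longrightarrow> eqvJ (JWhere J N) (JWhere J' N)"
| c_jwh2: "eqv N N' \<Longrightarrow> eqvJ (JWhere J N) (JWhere J N')"

text \<open>Root reduction rules on terms (the z in ad1/ad2 is the fresh index 0).\<close>
inductive top_t :: "trm \<Rightarrow> trm \<Rightarrow> bool" where
  ad1: "\<not> is_val N \<Longrightarrow> top_t (App N M) (Where (App (Var 0) (ren Suc id M)) N)"
| ad2: "is_val V \<Longrightarrow> \<not> is_val N \<Longrightarrow> top_t (App V N) (Where (App (ren Suc id V) (Var 0)) N)"
| beta_lam: "is_val V \<Longrightarrow> top_t (App (Lam M) V) (Where M V)"
| beta_let: "is_val V \<Longrightarrow> top_t (Where M V) (subst (cons1 V) M)"
| beta_mu: "top_t (Where M (Mu J)) (Mu (ssJ (ren id Suc M) 0 J))"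
| eta_lam: "is_val V \<Longrightarrow> top_t (Lam (App (ren Suc id V) (Var 0))) V"
| eta_let: "top_t (Where (Var 0) M) M"
| eta_mu: "top_t (Mu (Jmp 0 (ren id Suc M))) M"

inductive top_j :: "jmp \<Rightarrow> jmp \<Rightarrow> bool" where
  beta_jmp: "top_j (Jmp l (Mu J)) (renJ id (kcons l) J)"

inductive vert_t :: "trm \<Rightarrow> trm \<Rightarrow> bool" where
  "vert_t (Mu (Jmp 0 (ren id Suc M))) M"

inductive cstep :: "(trm \<Rightarrow> trm \<Rightarrow> bool) \<Rightarrow> (jmp \<Rightarrow> jmp \<Rightarrow> bool) \<Rightarrow> trm \<Rightarrow> trm \<Rightarrow> bool"
and cstepJ :: "(trm \<Rightarrow> trm \<Rightarrow> bool) \<Rightarrow> (jmp \<Rightarrow> jmp \<Rightarrow> bool) \<Rightarrow> jmp \<Rightarrow> jmp \<Rightarrow> bool"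
for R S where
  top: "R M N \<Longrightarrow> cstep R S M N"
| topJ: "S J J' \<Longrightarrow> cstepJ R S J J'"
| s_lam: "cstep R S M M' \<Longrightarrow> cstep R S (Lam M) (Lam M')"
| s_app1: "cstep R S M M' \<Longrightarrow> cstep R S (App M N) (App M' N)"
| s_app2: "cstep R S N N' \<Longrightarrow> cstep R S (App M N) (App M N')"
| s_wh1: "cstep R S M M' \<Longrightarrow> cstep R S (Where M N) (Where M' N)"
| s_wh2: "cstep R S N N' \<Longrightarrow> cstep R S (Where M N) (Where M N')"
| s_mu: "cstepJ R S J J' \<Longrightarrow> cstep R S (Mu J) (Mu J')"
| s_jmp: "cstep R S M M' \<Longrightarrow> cstepJ R S (Jmp k M) (Jmp k M')"
| s_jwh1: "cstepJ R S J J' \<Longrightarrow> cstepJ R S (JWhere J N) (JWhere J' N)"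
| s_jwh2: "cstep R S N N' \<Longrightarrow> cstepJ R S (JWhere J N) (JWhere J N')"

definition ccv_step :: "trm \<Rightarrow> trm \<Rightarrow> bool" where
  "ccv_step M N \<longleftrightarrow> (\<exists>M' N'. eqv M M' \<and> cstep top_t top_j M' N' \<and> eqv N' N)"

definition ccv_red :: "trm \<Rightarrow> trm \<Rightarrow> bool" where
  "ccv_red = (\<lambda>M N. eqv M N \<or> ccv_step M N)\<^sup>*\<^sup>*"

definition vstep :: "trm \<Rightarrow> trm \<Rightarrow> bool" where
  "vstep M N \<longleftrightarrow> (\<exists>M' N'. eqv M M' \<and> cstep vert_t (\<lambda>_ _. False) M' N' \<and> eqv N' N)"

definition vert_nf :: "trm \<Rightarrow> trm \<Rightarrow> bool" where
  "vert_nf M P \<longleftrightarrow> (\<lambda>A B. eqv A B \<or> vstep A B)\<^sup>*\<^sup>* M P \<and> \<not> (\<exists>Q. vstep P Q)"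

datatype tT = TLamK tQ | TApp tW tW
and tQ = QK tK tW | QT tT tK
and tW = WVar nat | WLam tT
and tK = KVar nat | KLam tQ

fun renT :: "(nat \<Rightarrow> nat) \<Rightarrow> (nat \<Rightarrow> nat) \<Rightarrow> tT \<Rightarrow> tT"
and renQ :: "(nat \<Rightarrow> nat) \<Rightarrow> (nat \<Rightarrow> nat) \<Rightarrow> tQ \<Rightarrow> tQ"
and renW :: "(nat \<Rightarrow> nat) \<Rightarrow> (nat \<Rightarrow> nat) \<Rightarrow> tW \<Rightarrow> tW"
and renK :: "(nat \<Rightarrow> nat) \<Rightarrow> (nat \<Rightarrow> nat) \<Rightarrow> tK \<Rightarrow> tK" where
  "renT f g (TLamK Q) = TLamK (renQ f (lift g) Q)"
| "renT f g (TApp a b) = TApp (renW f g a) (renW f g b)"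
| "renQ f g (QK K W) = QK (renK f g K) (renW f g W)"
| "renQ f g (QT T K) = QT (renT f g T) (renK f g K)"
| "renW f g (WVar n) = WVar (f n)"
| "renW f g (WLam T) = WLam (renT (lift f) g T)"
| "renK f g (KVar n) = KVar (g n)"
| "renK f g (KLam Q) = KLam (renQ (lift f) g Q)"

definition liftW :: "(nat \<Rightarrow> tW) \<Rightarrow> nat \<Rightarrow> tW" where
  "liftW \<sigma> n = (case n of 0 \<Rightarrow> WVar 0 | Suc m \<Rightarrow> renW Suc id (\<sigma> m))"

definition liftK :: "(nat \<Rightarrow> tK) \<Rightarrow> nat \<Rightarrow> tK" where
  "liftK \<tau> n = (case n of 0 \<Rightarrow> KVar 0 | Suc m \<Rightarrow> renK id Suc (\<tau> m))"

fun subT :: "(nat \<Rightarrow> tW) \<Rightarrow> (nat \<Rightarrow> tK) \<Rightarrow> tT \<Rightarrow> tT"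
and subQ :: "(nat \<Rightarrow> tW) \<Rightarrow> (nat \<Rightarrow> tK) \<Rightarrow> tQ \<Rightarrow> tQ"
and subW :: "(nat \<Rightarrow> tW) \<Rightarrow> (nat \<Rightarrow> tK) \<Rightarrow> tW \<Rightarrow> tW"
and subK :: "(nat \<Rightarrow> tW) \<Rightarrow> (nat \<Rightarrow> tK) \<Rightarrow> tK \<Rightarrow> tK" where
  "subT \<sigma> \<tau> (TLamK Q) = TLamK (subQ (renW id Suc \<circ> \<sigma>) (liftK \<tau>) Q)"
| "subT \<sigma> \<tau> (TApp a b) = TApp (subW \<sigma> \<tau> a) (subW \<sigma> \<tau> b)"
| "subQ \<sigma> \<tau> (QK K W) = QK (subK \<sigma> \<tau> K) (subW \<sigma> \<tau> W)"
| "subQ \<sigma> \<tau> (QT T K) = QT (subT \<sigma> \<tau> T) (subK \<sigma> \<tau> K)"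
| "subW \<sigma> \<tau> (WVar n) = \<sigma> n"
| "subW \<sigma> \<tau> (WLam T) = WLam (subT (liftW \<sigma>) (renK Suc id \<circ> \<tau>) T)"
| "subK \<sigma> \<tau> (KVar n) = \<tau> n"
| "subK \<sigma> \<tau> (KLam Q) = KLam (subQ (liftW \<sigma>) (renK Suc id \<circ> \<tau>) Q)"

definition consW :: "tW \<Rightarrow> nat \<Rightarrow> tW" where
  "consW W n = (case n of 0 \<Rightarrow> W | Suc m \<Rightarrow> WVar m)"

definition consK :: "tK \<Rightarrow> nat \<Rightarrow> tK" where
  "consK K n = (case n of 0 \<Rightarrow> K | Suc m \<Rightarrow> KVar m)"

inductive stT :: "tT \<Rightarrow> tT \<Rightarrow> bool"
and stQ :: "tQ \<Rightarrow> tQ \<Rightarrow> bool"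
and stW :: "tW \<Rightarrow> tW \<Rightarrow> bool"
and stK :: "tK \<Rightarrow> tK \<Rightarrow> bool" where
  betaW: "stT (TApp (WLam T) W) (subT (consW W) KVar T)"
| betaK: "stQ (QT (TLamK Q) K) (subQ WVar (consK K) Q)"
| betaQ: "stQ (QK (KLam Q) W) (subQ (consW W) KVar Q)"
| etaW: "stW (WLam (TApp (renW Suc id W) (WVar 0))) W"
| etaT: "stT (TLamK (QT (renT id Suc T) (KVar 0))) T"
| etaK: "stK (KLam (QK (renK Suc id K) (WVar 0))) K"
| cT_lam: "stQ Q Q' \<Longrightarrow> stT (TLamK Q) (TLamK Q')"
| cT_app1: "stW a a' \<Longrightarrow> stT (TApp a b) (TApp a' b)"
| cT_app2: "stW b b' \<Longrightarrow> stT (TApp a b) (TApp a b')"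
| cQ_K1: "stK K K' \<Longrightarrow> stQ (QK K W) (QK K' W)"
| cQ_K2: "stW W W' \<Longrightarrow> stQ (QK K W) (QK K W')"
| cQ_T1: "stT T T' \<Longrightarrow> stQ (QT T K) (QT T' K)"
| cQ_T2: "stK K K' \<Longrightarrow> stQ (QT T K) (QT T K')"
| cW_lam: "stT T T' \<Longrightarrow> stW (WLam T) (WLam T')"
| cK_lam: "stQ Q Q' \<Longrightarrow> stK (KLam Q) (KLam Q')"

text \<open>fx / fk map the free ordinary / continuation indices of the CCV term to
  indices of the current target context; the continuation K lives in that context.
  star is V^*, cps is \<langle>M\<rangle>[K], cpsJ is \<langle>J\<rangle>.\<close>
fun star :: "(nat \<Rightarrow> nat) \<Rightarrow> (nat \<Rightarrow> nat) \<Rightarrow> trm \<Rightarrow> tW"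
and cps :: "(nat \<Rightarrow> nat) \<Rightarrow> (nat \<Rightarrow> nat) \<Rightarrow> trm \<Rightarrow> tK \<Rightarrow> tQ"
and cpsJ :: "(nat \<Rightarrow> nat) \<Rightarrow> (nat \<Rightarrow> nat) \<Rightarrow> jmp \<Rightarrow> tQ" where
  "star fx fk (Var n) = WVar (fx n)"
| "star fx fk (Lam M) = WLam (TLamK (cps (lift fx) (Suc \<circ> fk) M (KVar 0)))"
| "star fx fk (App _ _) = undefined"
| "star fx fk (Where _ _) = undefined"
| "star fx fk (Mu _) = undefined"
| "cps fx fk (Var n) K = QK K (WVar (fx n))"
| "cps fx fk (Lam M) K = QK K (WLam (TLamK (cps (lift fx) (Suc \<circ> fk) M (KVar 0))))"
| "cps fx fk (App A B) K =
    (if is_val A \<and> is_val B then QT (TApp (star fx fk A) (star fx fk B)) K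
     else if is_val A then
       cps fx fk B (KLam (QT (TApp (star (Suc \<circ> fx) fk A) (WVar 0)) (renK Suc id K)))
     else if is_val B then
       cps fx fk A (KLam (QT (TApp (WVar 0) (star (Suc \<circ> fx) fk B)) (renK Suc id K)))
     else
       cps fx fk A (KLam (cps (Suc \<circ> fx) fk B
          (KLam (QT (TApp (WVar 1) (WVar 0)) (renK (Suc \<circ> Suc) id K))))))"
| "cps fx fk (Where L M) K = cps fx fk M (KLam (cps (lift fx) fk L (renK Suc id K)))"
| "cps fx fk (Mu J) K = QT (TLamK (cpsJ fx (lift fk) J)) K"
| "cpsJ fx fk (Jmp k M) = cps fx fk M (KVar (fk k))"
| "cpsJ fx fk (JWhere J M) = cps fx fk M (KLam (cpsJ (lift fx) fk J))"

definition CPS :: "trm \<Rightarrow> tT" where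
  "CPS M = TLamK (cps id Suc M (KVar 0))"

text \<open>invK K M is K^{-1}[M]; the hole of K^{-1} is never under a binder.\<close>
fun invT :: "tT \<Rightarrow> trm"
and invQ :: "tQ \<Rightarrow> jmp"
and invW :: "tW \<Rightarrow> trm"
and invK :: "tK \<Rightarrow> trm \<Rightarrow> jmp" where
  "invT (TLamK Q) = Mu (invQ Q)"
| "invT (TApp a b) = App (invW a) (invW b)"
| "invQ (QK K W) = invK K (invW W)"
| "invQ (QT T K) = invK K (invT T)"
| "invW (WVar n) = Var n"
| "invW (WLam T) = Lam (invT T)"
| "invK (KVar k) M = Jmp k M"
| "invK (KLam Q) M = JWhere (invQ Q) M"

end

theory Submission
  imports Defs
begin



lemma lift_0[simp]: "lift f 0 = 0" and lift_Suc[simp]: "lift f (Suc n) = Suc (f n)"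
  by (simp_all add: lift_def)

lemma lift_comp: "lift f \<circ> lift g = lift (f \<circ> g)"
  by (rule ext) (simp add: lift_def split: nat.split)

lemma lift_comp'[simp]: "lift f (lift g n) = lift (f \<circ> g) n"
  by (simp add: lift_def split: nat.split)

lemma lift_id[simp]: "lift id = id"
  by (rule ext) (simp add: lift_def split: nat.split)

lemma lift_id'[simp]: "lift (\<lambda>x. x) = (\<lambda>x. x)"
  using lift_id by (simp add: id_def)

lemma ren_ren:
  "ren f g (ren f' g' M) = ren (f \<circ> f') (g \<circ> g') M"
  "renJ f g (renJ f' g' J) = renJ (f \<circ> f') (g \<circ> g') J"
  by (induction f' g' M and f' g' J arbitrary: f g and f g rule: ren_renJ.induct)
     (simp_all add: lift_comp)

lemma ren_id[simp]: "ren id id M = M" "renJ id id J = J"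
  by (induction M and J) simp_all

lemma ren_Mu_lift_comm: "lift g \<circ> Suc = Suc \<circ> g"
  by (rule ext) simp

fun kfv :: "trm \<Rightarrow> nat set" and kfvJ :: "jmp \<Rightarrow> nat set" where
  "kfv (Var n) = {}"
| "kfv (Lam M) = kfv M"
| "kfv (App M N) = kfv M \<union> kfv N"
| "kfv (Where M N) = kfv M \<union> kfv N"
| "kfv (Mu J) = {n. Suc n \<in> kfvJ J}"
| "kfvJ (Jmp k M) = insert k (kfv M)"
| "kfvJ (JWhere J M) = kfvJ J \<union> kfv M"
lemma Suc_in_lift_image: "(Suc n \<in> lift g ` S) = (\<exists>m. Suc m \<in> S \<and> n = g m)"
proof
  assume "Suc n \<in> lift g ` S"
  then obtain x where "x \<in> S" "Suc n = lift g x" by auto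
  then show "\<exists>m. Suc m \<in> S \<and> n = g m"
    by (cases x) auto
next
  assume "\<exists>m. Suc m \<in> S \<and> n = g m"
  then obtain m where "Suc m \<in> S" "n = g m" by auto
  then show "Suc n \<in> lift g ` S" by (metis image_eqI lift_Suc)
qed

lemma kfv_ren:
  "kfv (ren f g M) = g ` kfv M"
  "kfvJ (renJ f g J) = g ` kfvJ J"
proof (induction f g M and f g J rule: ren_renJ.induct)
  case (5 f g J)
  then show ?case
    by (simp add: Suc_in_lift_image) blast
qed (simp_all add: image_Un)
lemma ren_cong:
  "(\<And>k. k \<in> kfv M \<Longrightarrow> g k = g' k) \<Longrightarrow> ren f g M = ren f g' M"
  "(\<And>k. k \<in> kfvJ J \<Longrightarrow> g k = g' k) \<Longrightarrow> renJ f g J = renJ f g' J"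
proof (induction f g M and f g J arbitrary: g' and g' rule: ren_renJ.induct)
  case (5 f g J)
  have "renJ f (lift g) J = renJ f (lift g') J"
    apply (rule 5(1))
    using 5(2) by (auto simp: lift_def split: nat.split)
  then show ?case by simp
qed auto

definition unshift :: "trm \<Rightarrow> trm" where
  "unshift L = ren id (\<lambda>n. n - 1) L"

lemma unshift_shift[simp]: "unshift (ren id Suc X) = X"
  unfolding unshift_def by (simp add: ren_ren comp_def id_def[symmetric])

lemma shift_unshift: "0 \<notin> kfv L \<Longrightarrow> ren id Suc (unshift L) = L"
proof -
  assume a: "0 \<notin> kfv L"
  have "ren id (Suc \<circ> (\<lambda>n. n - 1)) L = ren id id L"
    by (rule ren_cong) (use a in \<open>auto, metis Suc_pred neq0_conv\<close>)
  then show ?thesis unfolding unshift_def ren_ren by simp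
qed

lemma kfv_shift_0[simp]: "0 \<notin> kfv (ren f Suc X)"
  by (simp add: kfv_ren)


lemma liftS_0[simp]: "liftS \<sigma> 0 = Var 0" and liftS_Suc[simp]: "liftS \<sigma> (Suc n) = ren Suc id (\<sigma> n)"
  by (simp_all add: liftS_def)

lemma cons1_0[simp]: "cons1 V 0 = V" and cons1_Suc[simp]: "cons1 V (Suc n) = Var n"
  by (simp_all add: cons1_def)

lemma kcons_0[simp]: "kcons l 0 = l" and kcons_Suc[simp]: "kcons l (Suc n) = n"
  by (simp_all add: kcons_def)

lemma fun_eq_nat: "f 0 = g 0 \<Longrightarrow> (\<And>n. f (Suc n) = g (Suc n)) \<Longrightarrow> f = g"
  by (rule ext) (case_tac x, auto)

lemma subst_ren_ord:
  "subst \<sigma> (ren f id M) = subst (\<sigma> \<circ> f) M"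
  "substJ \<sigma> (renJ f id J) = substJ (\<sigma> \<circ> f) J"
proof (induction M and J arbitrary: \<sigma> f and \<sigma> f)
  case (Lam M)
  have "liftS \<sigma> \<circ> lift f = liftS (\<sigma> \<circ> f)" by (rule fun_eq_nat) auto
  with Lam show ?case by (simp add: comp_def)
next
  case (Where L M)
  have "liftS \<sigma> \<circ> lift f = liftS (\<sigma> \<circ> f)" by (rule fun_eq_nat) auto
  with Where show ?case by (simp add: comp_def)
next
  case (JWhere J M)
  have "liftS \<sigma> \<circ> lift f = liftS (\<sigma> \<circ> f)" by (rule fun_eq_nat) auto
  with JWhere show ?case by (simp add: comp_def)
next
  case (Mu J)
  then show ?case by (simp add: comp_def)
qed simp_all

lemma ren_liftS: "ren (lift f) g \<circ> liftS \<sigma> = liftS (ren f g \<circ> \<sigma>)"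
  by (rule fun_eq_nat) (simp_all add: ren_ren comp_def)

lemma ren_subst:
  "ren f g (subst \<sigma> M) = subst (ren f g \<circ> \<sigma>) (ren id g M)"
  "renJ f g (substJ \<sigma> J) = substJ (ren f g \<circ> \<sigma>) (renJ id g J)"
proof (induction M and J arbitrary: \<sigma> f g and \<sigma> f g)
  case (Mu J)
  have "ren f (lift g) \<circ> (ren id Suc \<circ> \<sigma>) = ren id Suc \<circ> (ren f g \<circ> \<sigma>)"
    by (rule ext) (simp add: ren_ren ren_Mu_lift_comm)
  with Mu show ?case by (simp add: comp_def)
qed (simp_all add: ren_liftS)

lemma liftS_Var[simp]: "liftS Var = Var"
  by (rule fun_eq_nat) simp_all

lemma subst_Var[simp]: "subst Var M = M" "substJ Var J = J"
proof (induction M and J)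
  case (Mu J)
  have "ren id Suc \<circ> Var = Var" by (rule ext) simp
  with Mu show ?case by simp
qed simp_all

lemma ren_subst_cons1:
  "ren f g (subst (cons1 V) M) = subst (cons1 (ren f g V)) (ren (lift f) g M)"
proof -
  have "ren (lift f) g M = ren (lift f) id (ren id g M)" by (simp add: ren_ren)
  moreover have "cons1 (ren f g V) \<circ> lift f = ren f g \<circ> cons1 V"
    by (rule fun_eq_nat) simp_all
  ultimately show ?thesis by (simp add: ren_subst subst_ren_ord)
qed

definition kU :: "(nat \<Rightarrow> trm) \<Rightarrow> nat set" where
  "kU \<sigma> = (\<Union>n. kfv (\<sigma> n))"

lemma kU_liftS: "kU (liftS \<sigma>) \<subseteq> kU \<sigma>"
  unfolding kU_def
proof
  fix x assume "x \<in> (\<Union>n. kfv (liftS \<sigma> n))"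
  then obtain n where "x \<in> kfv (liftS \<sigma> n)" by blast
  then show "x \<in> (\<Union>n. kfv (\<sigma> n))" by (cases n) (auto simp: kfv_ren)
qed

lemma kU_shift: "kU (\<lambda>a. ren id Suc (\<sigma> a)) = Suc ` kU \<sigma>"
  unfolding kU_def by (auto simp: kfv_ren)

lemma kfv_subst:
  "kfv (subst \<sigma> M) \<subseteq> kfv M \<union> kU \<sigma> \<and> kfv M \<subseteq> kfv (subst \<sigma> M)"
  "kfvJ (substJ \<sigma> J) \<subseteq> kfvJ J \<union> kU \<sigma> \<and> kfvJ J \<subseteq> kfvJ (substJ \<sigma> J)"
proof (induction M and J arbitrary: \<sigma> and \<sigma>)
  case (Var n)
  then show ?case by (auto simp: kU_def)
next
  case (Lam M)
  then show ?case using kU_liftS[of \<sigma>] by (metis kfv.simps(2) subst.simps(2) subset_trans Un_mono order_refl)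
next
  case (App M N)
  from App.IH[of \<sigma>] show ?case by auto
next
  case (Where L M)
  from Where.IH(1)[of "liftS \<sigma>"] Where.IH(2)[of \<sigma>] kU_liftS[of \<sigma>] show ?case by auto
next
  case (JWhere J M)
  from JWhere.IH(1)[of "liftS \<sigma>"] JWhere.IH(2)[of \<sigma>] kU_liftS[of \<sigma>] show ?case by auto
next
  case (Jmp k M)
  from Jmp.IH[of \<sigma>] show ?case by auto
next
  case (Mu J)
  from Mu[of "ren id Suc \<circ> \<sigma>"] show ?case by (auto simp: kU_shift comp_def)
qed

lemma ren_comm1: "ren (lift (lift f)) g (ren (lift Suc) id P) = ren (lift Suc) id (ren (lift f) g P)"
proof -
  have "lift (lift f) \<circ> lift Suc = lift Suc \<circ> lift f"
    by (rule fun_eq_nat) simp_all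
  then show ?thesis by (simp add: ren_ren)
qed

lemma ren_comm2: "ren f (lift g) (ren id Suc P) = ren id Suc (ren f g P)"
  by (simp add: ren_ren ren_Mu_lift_comm)

lemma ren_comm3: "ren (lift Suc) id (ren id g P) = ren id g (ren (lift Suc) id P)"
  by (simp add: ren_ren)

lemma ren_comm4: "renJ (lift Suc) id (renJ id g P) = renJ id g (renJ (lift Suc) id P)"
  by (simp add: ren_ren)

lemma ss_nofree:
  "c \<notin> kfv X \<Longrightarrow> ss P c X = X"
  "c \<notin> kfvJ J \<Longrightarrow> ssJ P c J = J"
  by (induction X and J arbitrary: P c and P c) auto

lemma kfv_ss:
  "kfv (ss P c X) \<subseteq> kfv X \<union> kfv P \<and> kfv X \<subseteq> kfv (ss P c X)"
  "kfvJ (ssJ P c J) \<subseteq> kfvJ J \<union> kfv P \<and> kfvJ J \<subseteq> kfvJ (ssJ P c J)"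
proof (induction X and J arbitrary: P c and P c)
  case (Lam M)
  from Lam.IH[of "ren (lift Suc) id P" c] show ?case by (simp add: kfv_ren)
next
  case (App M N)
  from App.IH(1)[of P c] App.IH(2)[of P c] show ?case by auto
next
  case (Where L M)
  from Where.IH(1)[of "ren (lift Suc) id P" c] Where.IH(2)[of P c] show ?case by (auto simp: kfv_ren)
next
  case (JWhere J M)
  from JWhere.IH(1)[of "ren (lift Suc) id P" c] JWhere.IH(2)[of P c] show ?case by (auto simp: kfv_ren)
next
  case (Mu J)
  from Mu[of "ren id Suc P" "Suc c"] show ?case by (auto simp: kfv_ren)
next
  case (Jmp l Q)
  from Jmp.IH[of P c] show ?case by (auto simp: kfv_ren)
qed auto

lemma ren_ss:
  "(\<And>l. g l = g c \<Longrightarrow> l = c) \<Longrightarrow> ren f g (ss P c X) = ss (ren (lift f) g P) (g c) (ren f g X)"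
  "(\<And>l. g l = g c \<Longrightarrow> l = c) \<Longrightarrow> renJ f g (ssJ P c J) = ssJ (ren (lift f) g P) (g c) (renJ f g J)"
proof (induction X and J arbitrary: P c f g and P c f g)
  case (Mu J)
  have "\<And>l. lift g l = lift g (Suc c) \<Longrightarrow> l = Suc c"
    using Mu(2) by (case_tac l) auto
  from Mu(1)[OF this] show ?case by (simp add: ren_comm2[symmetric] ren_ren comp_def)
next
  case (Jmp l Q)
  then show ?case by auto
qed (simp_all add: ren_comm1)

fun jhd :: "jmp \<Rightarrow> nat" where
  "jhd (Jmp k M) = k"
| "jhd (JWhere J M) = jhd J"

fun jbody :: "jmp \<Rightarrow> trm" where
  "jbody (Jmp k M) = M"
| "jbody (JWhere J M) = Where (jbody J) M"

lemma jhd_ren[simp]: "jhd (renJ f g J) = g (jhd J)"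
  by (induction J arbitrary: f rule: jhd.induct) auto

lemma jbody_ren[simp]: "jbody (renJ f g J) = ren f g (jbody J)"
  by (induction J arbitrary: f rule: jhd.induct) auto

lemma jhd_subst[simp]: "jhd (substJ \<sigma> J) = jhd J"
  by (induction J arbitrary: \<sigma> rule: jhd.induct) auto

lemma jbody_subst[simp]: "jbody (substJ \<sigma> J) = subst \<sigma> (jbody J)"
  by (induction J arbitrary: \<sigma> rule: jhd.induct) auto

lemma kfvJ_flat: "kfvJ J = insert (jhd J) (kfv (jbody J))"
  by (induction J arbitrary: f rule: jhd.induct) auto

lemmas eqv_cong = eqv_eqvJ.c_lam eqv_eqvJ.c_app1 eqv_eqvJ.c_app2 eqv_eqvJ.c_wh1 eqv_eqvJ.c_wh2
  eqv_eqvJ.c_mu eqv_eqvJ.c_jmp eqv_eqvJ.c_jwh1 eqv_eqvJ.c_jwh2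

lemma eqv_flat: "eqvJ J (Jmp (jhd J) (jbody J))"
proof (induction J rule: jhd.induct)
  case (1 k M)
  then show ?case by (simp add: eqv_eqvJ.reflJ)
next
  case (2 J M)
  then show ?case
    by (metis eqv_eqvJ.E3 eqv_eqvJ.c_jwh1 eqv_eqvJ.symJ eqv_eqvJ.transJ jbody.simps(2) jhd.simps(2))
qed

lemma eqv_flat_inv:
  "eqv M N \<Longrightarrow> True"
  "eqvJ J J' \<Longrightarrow> jhd J = jhd J' \<and> eqv (jbody J) (jbody J')"
proof (induction rule: eqv_eqvJ.inducts)
  case (transJ J J' J'')
  then show ?case by (metis eqv_eqvJ.trans)
qed (auto intro: eqv_cong eqv_eqvJ.refl eqv_eqvJ.sym)

lemma eqvJ_iff_flat: "eqvJ J J' \<longleftrightarrow> jhd J = jhd J' \<and> eqv (jbody J) (jbody J')"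
  by (metis eqv_flat eqv_flat_inv(2) eqv_eqvJ.c_jmp eqv_eqvJ.symJ eqv_eqvJ.transJ)

lemma eqv_kfv:
  "eqv M N \<Longrightarrow> kfv M = kfv N"
  "eqvJ J J' \<Longrightarrow> kfvJ J = kfvJ J'"
proof (induction rule: eqv_eqvJ.inducts)
qed (auto simp: kfv_ren)

lemma eqv_ren:
  "eqv M N \<Longrightarrow> eqv (ren f g M) (ren f g N)"
  "eqvJ J J' \<Longrightarrow> eqvJ (renJ f g J) (renJ f g J')"
proof (induction arbitrary: f g and f g rule: eqv_eqvJ.inducts)
  case (E1 L M N)
  then show ?case using eqv_eqvJ.E1 by (simp add: ren_comm1)
next
  case (E2 J M)
  then show ?case using eqv_eqvJ.E2 by (simp add: ren_comm2)
next
  case (trans M N P) then show ?case by (metis eqv_eqvJ.trans)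
next
  case (transJ M N P) then show ?case by (metis eqv_eqvJ.transJ)
qed (auto intro: eqv_cong eqv_eqvJ.refl eqv_eqvJ.sym eqv_eqvJ.symJ eqv_eqvJ.reflJ eqv_eqvJ.E3)




abbreviation "cs \<equiv> cstep top_t top_j"
abbreviation "csJ \<equiv> cstepJ top_t top_j"

lemma is_val_ren[simp]: "is_val (ren f g V) = is_val V"
  by (cases V) auto

lemma ren_comm5: "ren (lift f) g (ren Suc id M) = ren Suc id (ren f g M)"
  by (simp add: ren_ren ren_Mu_lift_comm)

lemma top_t_ren: "top_t M N \<Longrightarrow> top_t (ren f g M) (ren f g N)"
proof (induction rule: top_t.induct)
  case (ad1 N M)
  then show ?case using top_t.ad1[of "ren f g N" "ren f g M"] by (simp add: ren_comm5)
next
  case (ad2 V N)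
  then show ?case using top_t.ad2[of "ren f g V" "ren f g N"] by (simp add: ren_comm5)
next
  case (beta_lam V M)
  then show ?case using top_t.beta_lam[of "ren f g V"] by simp
next
  case (beta_let V M)
  then show ?case using top_t.beta_let[of "ren f g V"] by (simp add: ren_subst_cons1)
next
  case (beta_mu M J)
  have "renJ f (lift g) (ssJ (ren id Suc M) 0 J) =
        ssJ (ren (lift f) (lift g) (ren id Suc M)) (lift g 0) (renJ f (lift g) J)"
    by (rule ren_ss) (case_tac l, auto)
  then show ?case using top_t.beta_mu[of "ren (lift f) g M" "renJ f (lift g) J"]
    by (simp add: ren_comm2)
next
  case (eta_lam V)
  then show ?case using top_t.eta_lam[of "ren f g V"] by (simp add: ren_comm5)
next
  case (eta_let M)
  then show ?case using top_t.eta_let[of "ren f g M"] by simp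
next
  case (eta_mu M)
  then show ?case using top_t.eta_mu[of "ren f g M"] by (simp add: ren_comm2)
qed

lemma top_j_ren: "top_j J J' \<Longrightarrow> top_j (renJ f g J) (renJ f g J')"
proof (induction rule: top_j.induct)
  case (beta_jmp l J)
  have "kcons (g l) \<circ> lift g = g \<circ> kcons l" by (rule fun_eq_nat) auto
  then show ?case using top_j.beta_jmp[of "g l" "renJ f (lift g) J"] by (simp add: ren_ren)
qed

lemma cs_ren:
  "cs M N \<Longrightarrow> cs (ren f g M) (ren f g N)"
  "csJ J J' \<Longrightarrow> csJ (renJ f g J) (renJ f g J')"
proof (induction arbitrary: f g and f g rule: cstep_cstepJ.inducts)
qed (auto intro: cstep_cstepJ.intros top_t_ren top_j_ren)

lemma top_t_kfv: "top_t M N \<Longrightarrow> kfv N \<subseteq> kfv M"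
proof (induction rule: top_t.induct)
  case (beta_let V M)
  have "kfv (subst (cons1 V) M) \<subseteq> kfv M \<union> kU (cons1 V)" by (rule kfv_subst(1)[THEN conjunct1])
  moreover have "kU (cons1 V) \<subseteq> kfv V" by (auto simp: kU_def cons1_def split: nat.splits)
  ultimately show ?case by auto
next
  case (beta_mu M J)
  then show ?case using kfv_ss(2)[of "ren id Suc M" 0 J] by (auto simp: kfv_ren)
qed (auto simp: kfv_ren)

lemma top_j_kfv: "top_j J J' \<Longrightarrow> kfvJ J' \<subseteq> kfvJ J"
proof (induction rule: top_j.induct)
  case (beta_jmp l J)
  show ?case
  proof
    fix x assume "x \<in> kfvJ (renJ id (kcons l) J)"
    then obtain y where "y \<in> kfvJ J" "x = kcons l y" by (auto simp: kfv_ren)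
    then show "x \<in> kfvJ (Jmp l (Mu J))" by (cases y) auto
  qed
qed

lemma cs_kfv:
  "cs M N \<Longrightarrow> kfv N \<subseteq> kfv M"
  "csJ J J' \<Longrightarrow> kfvJ J' \<subseteq> kfvJ J"
proof (induction rule: cstep_cstepJ.inducts)
qed (auto dest: top_t_kfv top_j_kfv)

definition ccv_stepJ :: "jmp \<Rightarrow> jmp \<Rightarrow> bool" where
  "ccv_stepJ J J' \<longleftrightarrow> (\<exists>A B. eqvJ J A \<and> csJ A B \<and> eqvJ B J')"

definition ccv_redJ :: "jmp \<Rightarrow> jmp \<Rightarrow> bool" where
  "ccv_redJ = (\<lambda>A B. eqvJ A B \<or> ccv_stepJ A B)\<^sup>*\<^sup>*"

lemma ccv_red_refl[simp]: "ccv_red M M"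
  by (simp add: ccv_red_def)

lemma ccv_redJ_refl[simp]: "ccv_redJ J J"
  by (simp add: ccv_redJ_def)

lemma ccv_red_trans[trans]: "ccv_red A B \<Longrightarrow> ccv_red B C \<Longrightarrow> ccv_red A C"
  unfolding ccv_red_def by (rule rtranclp_trans)

lemma ccv_redJ_trans[trans]: "ccv_redJ A B \<Longrightarrow> ccv_redJ B C \<Longrightarrow> ccv_redJ A C"
  unfolding ccv_redJ_def by (rule rtranclp_trans)

lemma eqv_red: "eqv A B \<Longrightarrow> ccv_red A B"
  unfolding ccv_red_def by auto

lemma eqvJ_red: "eqvJ A B \<Longrightarrow> ccv_redJ A B"
  unfolding ccv_redJ_def by auto

lemma cs_red: "cs A B \<Longrightarrow> ccv_red A B"
  unfolding ccv_red_def ccv_step_def by (blast intro: eqv_eqvJ.refl)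

lemma csJ_red: "csJ A B \<Longrightarrow> ccv_redJ A B"
  unfolding ccv_redJ_def ccv_stepJ_def by (blast intro: eqv_eqvJ.reflJ)

lemma top_red: "top_t A B \<Longrightarrow> ccv_red A B"
  by (rule cs_red) (rule cstep_cstepJ.top)

lemma topJ_red: "top_j A B \<Longrightarrow> ccv_redJ A B"
  by (rule csJ_red) (rule cstep_cstepJ.topJ)

lemma red_map_tt:
  fixes F :: "trm \<Rightarrow> trm"
  assumes "\<And>a b. eqv a b \<Longrightarrow> eqv (F a) (F b)" "\<And>a b. cs a b \<Longrightarrow> cs (F a) (F b)"
  shows "ccv_red a b \<Longrightarrow> ccv_red (F a) (F b)"
  unfolding ccv_red_def
proof (induction rule: rtranclp_induct)
  case (step y z)
  then have "eqv (F y) (F z) \<or> ccv_step (F y) (F z)"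
    using assms unfolding ccv_step_def by blast
  with step show ?case by (simp add: rtranclp.rtrancl_into_rtrancl)
qed simp

lemma red_map_tj:
  fixes F :: "trm \<Rightarrow> jmp"
  assumes "\<And>a b. eqv a b \<Longrightarrow> eqvJ (F a) (F b)" "\<And>a b. cs a b \<Longrightarrow> csJ (F a) (F b)"
  shows "ccv_red a b \<Longrightarrow> ccv_redJ (F a) (F b)"
  unfolding ccv_red_def ccv_redJ_def
proof (induction rule: rtranclp_induct)
  case (step y z)
  then have "eqvJ (F y) (F z) \<or> ccv_stepJ (F y) (F z)"
    using assms unfolding ccv_step_def ccv_stepJ_def by blast
  with step show ?case by (simp add: rtranclp.rtrancl_into_rtrancl)
qed simp

lemma red_map_jt:
  fixes F :: "jmp \<Rightarrow> trm"
  assumes "\<And>a b. eqvJ a b \<Longrightarrow> eqv (F a) (F b)" "\<And>a b. csJ a b \<Longrightarrow> cs (F a) (F b)"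
  shows "ccv_redJ a b \<Longrightarrow> ccv_red (F a) (F b)"
  unfolding ccv_red_def ccv_redJ_def
proof (induction rule: rtranclp_induct)
  case (step y z)
  then have "eqv (F y) (F z) \<or> ccv_step (F y) (F z)"
    using assms unfolding ccv_step_def ccv_stepJ_def by blast
  with step show ?case by (simp add: rtranclp.rtrancl_into_rtrancl)
qed simp

lemma red_map_jj:
  fixes F :: "jmp \<Rightarrow> jmp"
  assumes "\<And>a b. eqvJ a b \<Longrightarrow> eqvJ (F a) (F b)" "\<And>a b. csJ a b \<Longrightarrow> csJ (F a) (F b)"
  shows "ccv_redJ a b \<Longrightarrow> ccv_redJ (F a) (F b)"
  unfolding ccv_redJ_def
proof (induction rule: rtranclp_induct)
  case (step y z)
  then have "eqvJ (F y) (F z) \<or> ccv_stepJ (F y) (F z)"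
    using assms unfolding ccv_stepJ_def by blast
  with step show ?case by (simp add: rtranclp.rtrancl_into_rtrancl)
qed simp

lemma red_Lam: "ccv_red a b \<Longrightarrow> ccv_red (Lam a) (Lam b)"
  by (rule red_map_tt) (auto intro: cstep_cstepJ.intros eqv_cong)
lemma red_App1: "ccv_red a b \<Longrightarrow> ccv_red (App a c) (App b c)"
  by (rule red_map_tt[where F="\<lambda>x. App x c"]) (auto intro: cstep_cstepJ.intros eqv_cong)
lemma red_App2: "ccv_red a b \<Longrightarrow> ccv_red (App c a) (App c b)"
  by (rule red_map_tt[where F="\<lambda>x. App c x"]) (auto intro: cstep_cstepJ.intros eqv_cong)
lemma red_Where1: "ccv_red a b \<Longrightarrow> ccv_red (Where a c) (Where b c)"
  by (rule red_map_tt[where F="\<lambda>x. Where x c"]) (auto intro: cstep_cstepJ.intros eqv_cong)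
lemma red_Where2: "ccv_red a b \<Longrightarrow> ccv_red (Where c a) (Where c b)"
  by (rule red_map_tt[where F="\<lambda>x. Where c x"]) (auto intro: cstep_cstepJ.intros eqv_cong)
lemma red_ren: "ccv_red a b \<Longrightarrow> ccv_red (ren f g a) (ren f g b)"
  by (rule red_map_tt[where F="ren f g"]) (auto intro: cs_ren eqv_ren)
lemma red_Mu: "ccv_redJ a b \<Longrightarrow> ccv_red (Mu a) (Mu b)"
  by (rule red_map_jt) (auto intro: cstep_cstepJ.intros eqv_cong)
lemma red_Jmp: "ccv_red a b \<Longrightarrow> ccv_redJ (Jmp k a) (Jmp k b)"
  by (rule red_map_tj[where F="Jmp k"]) (auto intro: cstep_cstepJ.intros eqv_cong)
lemma red_JWhere1: "ccv_redJ a b \<Longrightarrow> ccv_redJ (JWhere a c) (JWhere b c)"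
  by (rule red_map_jj[where F="\<lambda>x. JWhere x c"]) (auto intro: cstep_cstepJ.intros eqv_cong)
lemma red_JWhere2: "ccv_red a b \<Longrightarrow> ccv_redJ (JWhere c a) (JWhere c b)"
  by (rule red_map_tj[where F="\<lambda>x. JWhere c x"]) (auto intro: cstep_cstepJ.intros eqv_cong)
lemma redJ_ren: "ccv_redJ a b \<Longrightarrow> ccv_redJ (renJ f g a) (renJ f g b)"
  by (rule red_map_jj[where F="renJ f g"]) (auto intro: cs_ren eqv_ren)




declare eqv_eqvJ.trans[trans] eqv_eqvJ.transJ[trans]

definition isred :: "jmp \<Rightarrow> bool" where
  "isred J \<longleftrightarrow> jhd J = 0 \<and> 0 \<notin> kfv (jbody J)"

definition vt :: "jmp \<Rightarrow> trm" where
  "vt J = (if isred J then unshift (jbody J) else Mu J)"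

fun vn :: "trm \<Rightarrow> trm" and vnJ :: "jmp \<Rightarrow> jmp" where
  "vn (Var n) = Var n"
| "vn (Lam M) = Lam (vn M)"
| "vn (App M N) = App (vn M) (vn N)"
| "vn (Where L M) = Where (vn L) (vn M)"
| "vn (Mu J) = vt (vnJ J)"
| "vnJ (Jmp k M) = Jmp k (vn M)"
| "vnJ (JWhere J M) = JWhere (vnJ J) (vn M)"

lemma jhd_vn[simp]: "jhd (vnJ J) = jhd J" and jbody_vn[simp]: "jbody (vnJ J) = vn (jbody J)"
  by (induction J rule: jhd.induct) auto

lemma unshift_Where: "unshift (Where L M) = Where (unshift L) (unshift M)"
  by (simp add: unshift_def)

lemma kfv_unshift: "kfv (unshift L) = (\<lambda>n. n - 1) ` kfv L"
  by (simp add: unshift_def kfv_ren)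

lemma pred_image: "0 \<notin> S \<Longrightarrow> (\<lambda>n. n - 1) ` S = {n. Suc n \<in> S}"
proof (intro set_eqI iffI)
  fix x assume "0 \<notin> S" "x \<in> (\<lambda>n. n - 1) ` S"
  then obtain y where "y \<in> S" "x = y - 1" by blast
  with \<open>0 \<notin> S\<close> show "x \<in> {n. Suc n \<in> S}" by (cases y) auto
next
  fix x assume "x \<in> {n. Suc n \<in> S}"
  then show "x \<in> (\<lambda>n. n - 1) ` S" by (metis diff_Suc_1 image_eqI mem_Collect_eq)
qed

lemma kfv_vt[simp]: "kfv (vt J) = kfv (Mu J)"
proof (cases "isred J")
  case True
  then have z: "0 \<notin> kfv (jbody J)" "jhd J = 0" by (auto simp: isred_def)
  have "kfv (vt J) = (\<lambda>n. n - 1) ` kfv (jbody J)" using True by (simp add: vt_def kfv_unshift)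
  also have "\<dots> = {n. Suc n \<in> kfv (jbody J)}" by (rule pred_image[OF z(1)])
  also have "\<dots> = kfv (Mu J)" using z(2) by (simp add: kfvJ_flat[of J])
  finally show ?thesis .
qed (simp add: vt_def)

lemma kfv_vn[simp]: "kfv (vn M) = kfv M" "kfvJ (vnJ J) = kfvJ J"
proof (induction M and J)
  case (Mu J)
  have "kfv (vn (Mu J)) = kfv (Mu (vnJ J))" by simp
  also have "\<dots> = kfv (Mu J)" by (simp only: kfv.simps Mu)
  finally show ?case .
qed auto

lemma is_val_vn[simp]: "is_val V \<Longrightarrow> is_val (vn V)"
  by (cases V) (auto simp: vt_def)

lemma isred_ren: "isred (renJ f (lift g) J) = isred J"
  unfolding isred_def by (auto simp: kfv_ren lift_def split: nat.splits)

lemma vt_ren: "vt (renJ f (lift g) J) = ren f g (vt J)"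
proof (cases "isred J")
  case True
  then have z: "0 \<notin> kfv (jbody J)" by (simp add: isred_def)
  have "jbody (renJ f (lift g) J) = ren id Suc (ren f g (unshift (jbody J)))"
    using shift_unshift[OF z] by (metis jbody_ren ren_comm2)
  then show ?thesis using True by (simp add: vt_def isred_ren)
qed (simp add: vt_def isred_ren)

lemma vn_ren: "vn (ren f g M) = ren f g (vn M)" "vnJ (renJ f g J) = renJ f g (vnJ J)"
  by (induction M and J arbitrary: f g and f g) (auto simp: vt_ren)

lemma vn_comp_liftS: "vn \<circ> liftS \<sigma> = liftS (vn \<circ> \<sigma>)"
  by (rule fun_eq_nat) (simp_all add: vn_ren)

lemma isred_subst: "isred (substJ (\<lambda>a. ren id Suc (\<rho> a)) J) = isred J"
proof -
  have "0 \<notin> kU (\<lambda>a. ren id Suc (\<rho> a))" by (auto simp: kU_shift)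
  then show ?thesis unfolding isred_def using kfv_subst(1)[of "\<lambda>a. ren id Suc (\<rho> a)" "jbody J"]
    by auto
qed

lemma vt_subst: "vt (substJ (\<lambda>a. ren id Suc (\<rho> a)) J) = subst \<rho> (vt J)"
proof (cases "isred J")
  case True
  then have z: "0 \<notin> kfv (jbody J)" by (simp add: isred_def)
  have "subst (\<lambda>a. ren id Suc (\<rho> a)) (jbody J) = ren id Suc (subst \<rho> (unshift (jbody J)))"
    using shift_unshift[OF z] ren_subst(1)[of id Suc \<rho> "unshift (jbody J)"]
    by (simp add: comp_def)
  then show ?thesis using True by (simp add: vt_def isred_subst)
next
  case False
  then show ?thesis by (simp add: vt_def isred_subst comp_def)
qed

lemma vn_subst: "vn (subst \<sigma> M) = subst (vn \<circ> \<sigma>) (vn M)" "vnJ (substJ \<sigma> J) = substJ (vn \<circ> \<sigma>) (vnJ J)"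
proof (induction M and J arbitrary: \<sigma> and \<sigma>)
  case (Mu J)
  then show ?case using vt_subst[of "vn \<circ> \<sigma>" "vnJ J"] by (simp add: comp_def vn_ren)
qed (simp_all add: vn_comp_liftS)

lemma jhd_ss[simp]: "jhd (ssJ P c J) = jhd J"
  by (induction J arbitrary: P rule: jhd.induct) auto

lemma jbody_ss: "jhd J \<noteq> c \<Longrightarrow> jbody (ssJ P c J) = ss P c (jbody J)"
  by (induction J arbitrary: P rule: jhd.induct) auto

lemma isred_ss: "isred (ssJ (ren id Suc P) (Suc c) J) = isred J"
  unfolding isred_def using kfv_ss(1)[of "ren id Suc P" "Suc c" "jbody J"]
  by (auto simp: jbody_ss kfv_ren)

lemma vt_ss: "vt (ssJ (ren id Suc P) (Suc c) J) = ss P c (vt J)"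
proof (cases "isred J")
  case True
  then have z: "0 \<notin> kfv (jbody J)" and h: "jhd J = 0" by (auto simp: isred_def)
  have "ss (ren id Suc P) (Suc c) (jbody J) = ren id Suc (ss P c (unshift (jbody J)))"
    using shift_unshift[OF z] ren_ss(1)[of Suc c id P "unshift (jbody J)"] by simp
  then show ?thesis using True h by (simp add: vt_def isred_ss jbody_ss)
next
  case False
  then show ?thesis by (simp add: vt_def isred_ss)
qed

lemma vn_ss: "vn (ss P c X) = ss (vn P) c (vn X)" "vnJ (ssJ P c J) = ssJ (vn P) c (vnJ J)"
proof (induction X and J arbitrary: P c and P c)
  case (Mu J)
  then show ?case using vt_ss[of "vn P" c "vnJ J"] by (simp add: vn_ren)
qed (simp_all add: vn_ren)

lemma vn_vn[simp]: "vn (vn M) = vn M" "vnJ (vnJ J) = vnJ J"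
proof (induction M and J)
  case (Mu J)
  show ?case
  proof (cases "isred (vnJ J)")
    case True
    have "vn (jbody (vnJ J)) = jbody (vnJ J)" using Mu by (metis jbody_vn)
    then show ?thesis using True by (simp add: vt_def unshift_def vn_ren)
  next
    case False
    then show ?thesis using Mu by (simp add: vt_def)
  qed
qed simp_all


lemma vt_cong: "eqvJ A B \<Longrightarrow> eqv (vt A) (vt B)"
proof -
  assume e: "eqvJ A B"
  then have h: "jhd A = jhd B" and b: "eqv (jbody A) (jbody B)" by (auto simp: eqvJ_iff_flat)
  then have k: "kfv (jbody A) = kfv (jbody B)" by (simp add: eqv_kfv)
  show ?thesis
  proof (cases "isred A")
    case True
    then have "isred B" using h k by (simp add: isred_def)
    then show ?thesis using True b by (simp add: vt_def unshift_def eqv_ren)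
  next
    case False
    then have "\<not> isred B" using h k by (simp add: isred_def)
    then show ?thesis using False e by (simp add: vt_def eqv_eqvJ.c_mu)
  qed
qed

lemma isred_JWhere: "isred (JWhere J (ren id Suc M)) = isred J"
  unfolding isred_def by (auto simp: kfv_ren)

lemma vt_E2: "eqv (Where (vt J) M) (vt (JWhere J (ren id Suc M)))"
proof (cases "isred J")
  case True
  then show ?thesis by (simp add: vt_def isred_JWhere unshift_Where eqv_eqvJ.refl)
next
  case False
  then show ?thesis by (simp add: vt_def isred_JWhere eqv_eqvJ.E2)
qed

lemma vn_eqv:
  "eqv M N \<Longrightarrow> eqv (vn M) (vn N)"
  "eqvJ J J' \<Longrightarrow> eqvJ (vnJ J) (vnJ J')"
proof (induction rule: eqv_eqvJ.inducts)
  case (E1 L M N)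
  then show ?case using eqv_eqvJ.E1 by (simp add: vn_ren)
next
  case (E2 J M)
  then show ?case using vt_E2 by (simp add: vn_ren)
next
  case (E3 k L M)
  then show ?case using eqv_eqvJ.E3 by simp
next
  case (trans M N P) then show ?case by (metis eqv_eqvJ.trans)
next
  case (transJ M N P) then show ?case by (metis eqv_eqvJ.transJ)
next
  case (c_mu J J')
  then show ?case by (simp add: vt_cong)
qed (auto intro: eqv_cong eqv_eqvJ.refl eqv_eqvJ.sym eqv_eqvJ.symJ eqv_eqvJ.reflJ)

abbreviation "vcs \<equiv> cstep vert_t (\<lambda>_ _. False)"
abbreviation "vcsJ \<equiv> cstepJ vert_t (\<lambda>_ _. False)"

lemma vn_vcs:
  "vcs M N \<Longrightarrow> eqv (vn M) (vn N)"
  "vcsJ J J' \<Longrightarrow> eqvJ (vnJ J) (vnJ J')"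
proof (induction rule: cstep_cstepJ.inducts)
  case (top M N)
  then show ?case
    by (cases rule: vert_t.cases) (simp add: vn_ren vt_def isred_def eqv_eqvJ.refl)
next
  case (s_mu J J')
  then show ?case by (simp add: vt_cong)
qed (auto intro: eqv_cong)

definition vstepJ :: "jmp \<Rightarrow> jmp \<Rightarrow> bool" where
  "vstepJ J J' \<longleftrightarrow> (\<exists>A B. eqvJ J A \<and> vcsJ A B \<and> eqvJ B J')"

lemma vn_fixed_or_step:
  "vn M = M \<or> (\<exists>Q. vstep M Q)"
  "vnJ J = J \<or> (\<exists>Q. vstepJ J Q)"
proof (induction M and J)
  case (Var x)
  then show ?case by simp
next
  case (Lam M)
  then show ?case unfolding vstep_def
    by (auto intro: eqv_cong cstep_cstepJ.intros)
next
  case (App M N)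
  then show ?case unfolding vstep_def
    by (auto intro: eqv_cong cstep_cstepJ.intros)
next
  case (Where M N)
  then show ?case unfolding vstep_def
    by (auto intro: eqv_cong cstep_cstepJ.intros)
next
  case (Jmp k M)
  then show ?case unfolding vstep_def vstepJ_def
    by (auto intro: eqv_cong cstep_cstepJ.intros)
next
  case (JWhere J M)
  then show ?case unfolding vstep_def vstepJ_def
    by (auto intro: eqv_cong cstep_cstepJ.intros)
next
  case (Mu J)
  show ?case
  proof (cases "vnJ J = J")
    case False
    with Mu show ?thesis unfolding vstep_def vstepJ_def
      by (auto intro: eqv_cong cstep_cstepJ.intros)
  next
    case True
    show ?thesis
    proof (cases "isred J")
      case False
      then show ?thesis using True by (simp add: vt_def)
    next
      case r: True
      then have z: "0 \<notin> kfv (jbody J)" "jhd J = 0" by (auto simp: isred_def)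
      have "eqv (Mu J) (Mu (Jmp 0 (ren id Suc (unshift (jbody J)))))"
        using eqv_flat[of J] z by (simp add: shift_unshift eqv_eqvJ.c_mu)
      moreover have "vcs (Mu (Jmp 0 (ren id Suc (unshift (jbody J))))) (unshift (jbody J))"
        by (rule cstep_cstepJ.top) (rule vert_t.intros)
      ultimately have "vstep (Mu J) (unshift (jbody J))"
        unfolding vstep_def by (blast intro: eqv_eqvJ.refl)
      then show ?thesis by blast
    qed
  qed
qed

lemma red_vt: "ccv_red (Mu J) (vt J)"
proof (cases "isred J")
  case True
  then have z: "0 \<notin> kfv (jbody J)" "jhd J = 0" by (auto simp: isred_def)
  have "eqv (Mu J) (Mu (Jmp 0 (ren id Suc (unshift (jbody J)))))"
    using eqv_flat[of J] z by (simp add: shift_unshift eqv_eqvJ.c_mu)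
  then have "ccv_red (Mu J) (Mu (Jmp 0 (ren id Suc (unshift (jbody J)))))" by (rule eqv_red)
  also have "ccv_red \<dots> (unshift (jbody J))" by (rule top_red) (rule top_t.eta_mu)
  finally show ?thesis using True by (simp add: vt_def)
qed (simp add: vt_def)

lemma red_vn: "ccv_red M (vn M)" "ccv_redJ J (vnJ J)"
proof (induction M and J)
  case (Lam M) then show ?case by (simp add: red_Lam)
next
  case (App M N) then show ?case by (metis red_App1 red_App2 ccv_red_trans vn.simps(3))
next
  case (Where M N) then show ?case by (metis red_Where1 red_Where2 ccv_red_trans vn.simps(4))
next
  case (Mu J) then show ?case by (metis red_Mu red_vt ccv_red_trans vn.simps(5))
next
  case (Jmp k M) then show ?case by (simp add: red_Jmp)
next
  case (JWhere J M) then show ?case by (metis red_JWhere1 red_JWhere2 ccv_redJ_trans vnJ.simps(2))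
qed simp

lemma vert_nf_vn: "vert_nf X P \<Longrightarrow> eqv P (vn X)"
proof -
  assume a: "vert_nf X P"
  then have r: "(\<lambda>A B. eqv A B \<or> vstep A B)\<^sup>*\<^sup>* X P" and n: "\<not> (\<exists>Q. vstep P Q)"
    by (auto simp: vert_nf_def)
  from r have "eqv (vn X) (vn P)"
  proof (induction rule: rtranclp_induct)
    case base then show ?case by (rule eqv_eqvJ.refl)
  next
    case (step y z)
    from step(2) have "eqv (vn y) (vn z)"
    proof
      assume "eqv y z" then show ?thesis by (rule vn_eqv)
    next
      assume "vstep y z"
      then obtain A B where "eqv y A" "vcs A B" "eqv B z" by (auto simp: vstep_def)
      then have "eqv (vn y) (vn A)" "eqv (vn A) (vn B)" "eqv (vn B) (vn z)"
        by (auto intro: vn_eqv(1) vn_vcs(1))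
      then show ?thesis by (metis eqv_eqvJ.trans)
    qed
    with step(3) show ?case by (rule eqv_eqvJ.trans)
  qed
  moreover have "vn P = P" using vn_fixed_or_step(1)[of P] n by blast
  ultimately show ?thesis by (metis eqv_eqvJ.sym)
qed


inductive_cases csJ_JmpE: "csJ (Jmp k M) J2"
inductive_cases csJ_JWhereE: "csJ (JWhere J M) J2"
inductive_cases topj_E: "top_j (Jmp k M) J2"

lemma unshift_Mu_beta:
  assumes "0 \<notin> kfv (Mu J3)"
  shows "unshift (Mu J3) = Mu (renJ id (kcons 0) J3)"
proof -
  have "renJ id (lift (\<lambda>n. n - 1)) J3 = renJ id (kcons 0) J3"
  proof (rule ren_cong(2))
    fix k assume "k \<in> kfvJ J3"
    with assms have "k \<noteq> 1" by auto
    then show "lift (\<lambda>n. n - 1) k = kcons 0 k"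
      by (cases k) (auto simp: lift_def kcons_def split: nat.splits)
  qed
  then show ?thesis by (simp add: unshift_def)
qed

lemma flat_step:
  "csJ J1 J2 \<Longrightarrow> jhd J1 = 0 \<Longrightarrow> 0 \<notin> kfv (jbody J1) \<Longrightarrow>
    (jhd J2 = 0 \<and> cs (jbody J1) (jbody J2)) \<or> eqv (unshift (jbody J1)) (Mu J2)"
proof (induction J1 arbitrary: J2 rule: jhd.induct)
  case (1 k M)
  from 1(1) consider (t) "top_j (Jmp k M) J2" | (s) M' where "J2 = Jmp k M'" "cs M M'"
    by (cases rule: csJ_JmpE) auto
  then show ?case
  proof cases
    case t
    then obtain J3 where "M = Mu J3" "J2 = renJ id (kcons k) J3" by (cases rule: topj_E) auto
    then show ?thesis using 1 unshift_Mu_beta[of J3] by (auto intro: eqv_eqvJ.refl)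
  next
    case s
    then show ?thesis using 1 by auto
  qed
next
  case (2 J M)
  from 2(2) consider (t) "top_j (JWhere J M) J2" | (s_jwh1) J' where "J2 = JWhere J' M" "csJ J J'"
    | (s_jwh2) M' where "J2 = JWhere J M'" "cs M M'"
    by (cases rule: csJ_JWhereE) auto
  then show ?case
  proof cases
    case t
    then show ?thesis by (cases rule: top_j.cases)
  next
    case s_jwh1
    have z: "0 \<notin> kfv (jbody J)" "0 \<notin> kfv M" using 2 by auto
    from 2(1)[OF s_jwh1(2)] 2(3) z(1)
    have "(jhd J' = 0 \<and> cs (jbody J) (jbody J')) \<or> eqv (unshift (jbody J)) (Mu J')" by simp
    then show ?thesis
    proof
      assume "jhd J' = 0 \<and> cs (jbody J) (jbody J')"
      then show ?thesis using s_jwh1 by (auto intro: cstep_cstepJ.s_wh1)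
    next
      assume e: "eqv (unshift (jbody J)) (Mu J')"
      have "eqv (unshift (jbody (JWhere J M))) (Where (Mu J') (unshift M))"
        using e by (simp add: unshift_Where eqv_eqvJ.c_wh1)
      also have "eqv \<dots> (Mu (JWhere J' (ren id Suc (unshift M))))" by (rule eqv_eqvJ.E2)
      finally have "eqv (unshift (jbody (JWhere J M))) (Mu (JWhere J' M))"
        using shift_unshift[OF z(2)] by simp
      then show ?thesis using s_jwh1 by simp
    qed
  next
    case s_jwh2
    then show ?thesis using 2 by (auto intro: cstep_cstepJ.s_wh2)
  qed
qed

lemma vt_step: "ccv_stepJ J1 J2 \<Longrightarrow> ccv_red (vt J1) (vt J2)"
proof -
  assume "ccv_stepJ J1 J2"
  then obtain A B where eA: "eqvJ J1 A" and s: "csJ A B" and eB: "eqvJ B J2"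
    by (auto simp: ccv_stepJ_def)
  have "ccv_red (vt A) (vt B)"
  proof (cases "isred A")
    case False
    then have "ccv_red (vt A) (Mu B)"
      using s by (simp add: vt_def cs_red cstep_cstepJ.s_mu)
    also have "ccv_red (Mu B) (vt B)" by (rule red_vt)
    finally show ?thesis .
  next
    case True
    then have z: "jhd A = 0" "0 \<notin> kfv (jbody A)" by (auto simp: isred_def)
    from flat_step[OF s z] show ?thesis
    proof
      assume a: "jhd B = 0 \<and> cs (jbody A) (jbody B)"
      then have "kfv (jbody B) \<subseteq> kfv (jbody A)" by (simp add: cs_kfv)
      with a z have "isred B" by (auto simp: isred_def)
      then show ?thesis using True a by (simp add: vt_def unshift_def cs_red cs_ren)
    next
      assume "eqv (unshift (jbody A)) (Mu B)"
      then have "ccv_red (vt A) (Mu B)" using True by (simp add: vt_def eqv_red)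
      also have "ccv_red (Mu B) (vt B)" by (rule red_vt)
      finally show ?thesis .
    qed
  qed
  then show ?thesis using vt_cong[OF eA] vt_cong[OF eB]
    by (meson ccv_red_trans eqv_red)
qed

lemma vt_mono: "ccv_redJ J1 J2 \<Longrightarrow> ccv_red (vt J1) (vt J2)"
  unfolding ccv_redJ_def
proof (induction rule: rtranclp_induct)
  case (step y z)
  from step(2) have "ccv_red (vt y) (vt z)"
    by (auto intro: vt_step eqv_red vt_cong)
  with step(3) show ?case by (rule ccv_red_trans)
qed simp




declare eqv_eqvJ.trans[trans] eqv_eqvJ.transJ[trans]

lemma liftW_0[simp]: "liftW \<sigma> 0 = WVar 0" and liftW_Suc[simp]: "liftW \<sigma> (Suc n) = renW Suc id (\<sigma> n)"
  by (simp_all add: liftW_def)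
lemma liftK_0[simp]: "liftK \<tau> 0 = KVar 0" and liftK_Suc[simp]: "liftK \<tau> (Suc n) = renK id Suc (\<tau> n)"
  by (simp_all add: liftK_def)
lemma consW_0[simp]: "consW W 0 = W" and consW_Suc[simp]: "consW W (Suc n) = WVar n"
  by (simp_all add: consW_def)
lemma consK_0[simp]: "consK K 0 = K" and consK_Suc[simp]: "consK K (Suc n) = KVar n"
  by (simp_all add: consK_def)

lemma liftW_WVar[simp]: "liftW WVar = WVar" by (rule fun_eq_nat) simp_all
lemma liftK_KVar[simp]: "liftK KVar = KVar" by (rule fun_eq_nat) simp_all
lemma renW_WVar_comp[simp]: "(\<lambda>a. renW f g (WVar a)) = (\<lambda>a. WVar (f a))" by simp
lemma renK_KVar_comp[simp]: "(\<lambda>a. renK f g (KVar a)) = (\<lambda>a. KVar (g a))" by simp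

lemma inv_ren:
  "invT (renT f g T) = ren f g (invT T)"
  "invQ (renQ f g Q) = renJ f g (invQ Q)"
  "invW (renW f g W) = ren f g (invW W)"
  "invK (renK f g K) (ren f g M) = renJ f g (invK K M)"
  by (induction T and Q and W and K arbitrary: f g and f g and f g and f g M) auto

lemma inv_ren_K: "invK (renK f g K) M' = renJ f g (invK K M)" if "M' = ren f g M"
  using that inv_ren(4) by simp

lemma inv_subst:
  "invT (subT \<sigma> KVar T) = subst (invW \<circ> \<sigma>) (invT T)"
  "invQ (subQ \<sigma> KVar Q) = substJ (invW \<circ> \<sigma>) (invQ Q)"
  "invW (subW \<sigma> KVar W) = subst (invW \<circ> \<sigma>) (invW W)"
  "invK (subK \<sigma> KVar K) (subst (invW \<circ> \<sigma>) M) = substJ (invW \<circ> \<sigma>) (invK K M)"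
proof (induction T and Q and W and K arbitrary: \<sigma> and \<sigma> and \<sigma> and \<sigma> M)
  case (TLamK Q)
  have "invW \<circ> (\<lambda>a. renW id Suc (\<sigma> a)) = (\<lambda>a. ren id Suc ((invW \<circ> \<sigma>) a))"
    by (rule ext) (simp add: inv_ren)
  then show ?case using TLamK[of "\<lambda>a. renW id Suc (\<sigma> a)"] by (simp add: comp_def)
next
  case (WLam T)
  have "invW \<circ> liftW \<sigma> = liftS (invW \<circ> \<sigma>)"
    by (rule fun_eq_nat) (simp_all add: inv_ren)
  moreover have "(\<lambda>a. renK Suc id (KVar a)) = KVar" by (rule ext) simp
  ultimately show ?case using WLam[of "liftW \<sigma>"] by (simp add: comp_def)
next
  case (KLam Q)
  have "invW \<circ> liftW \<sigma> = liftS (invW \<circ> \<sigma>)"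
    by (rule fun_eq_nat) (simp_all add: inv_ren)
  moreover have "(\<lambda>a. renK Suc id (KVar a)) = KVar" by (rule ext) simp
  ultimately show ?case using KLam[of "liftW \<sigma>"] by (simp add: comp_def)
qed (simp_all add: comp_def)

lemma subQ_ren: 
  "subT (\<lambda>n. WVar (f n)) (\<lambda>n. KVar (g n)) T = renT f g T"
  "subQ (\<lambda>n. WVar (f n)) (\<lambda>n. KVar (g n)) Q = renQ f g Q"
  "subW (\<lambda>n. WVar (f n)) (\<lambda>n. KVar (g n)) W = renW f g W"
  "subK (\<lambda>n. WVar (f n)) (\<lambda>n. KVar (g n)) K = renK f g K"
proof (induction T and Q and W and K arbitrary: f g and f g and f g and f g)
  case (TLamK Q)
  have "liftK (\<lambda>n. KVar (g n)) = (\<lambda>n. KVar (lift g n))" by (rule fun_eq_nat) simp_all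
  then show ?case using TLamK[of f "lift g"] by (simp add: comp_def)
next
  case (WLam T)
  have "liftW (\<lambda>n. WVar (f n)) = (\<lambda>n. WVar (lift f n))" by (rule fun_eq_nat) simp_all
  then show ?case using WLam[of "lift f" g] by (simp add: comp_def)
next
  case (KLam Q)
  have "liftW (\<lambda>n. WVar (f n)) = (\<lambda>n. WVar (lift f n))" by (rule fun_eq_nat) simp_all
  then show ?case using KLam[of "lift f" g] by (simp add: comp_def)
qed simp_all

lemma JWhere_flat: "eqvJ (JWhere J X) (Jmp (jhd J) (Where (jbody J) X))"
proof -
  have "eqvJ (JWhere J X) (JWhere (Jmp (jhd J) (jbody J)) X)"
    by (rule eqv_eqvJ.c_jwh1) (rule eqv_flat)
  also have "eqvJ \<dots> (Jmp (jhd J) (Where (jbody J) X))"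
    by (rule eqv_eqvJ.symJ) (rule eqv_eqvJ.E3)
  finally show ?thesis .
qed

lemma hard:
  "\<And>\<tau> c Q0 h P. \<tau> c = KLam Q0 \<Longrightarrow> (\<And>n. n \<noteq> c \<Longrightarrow> \<tau> n = KVar (h n)) \<Longrightarrow> jhd (invQ Q0) = h c
    \<Longrightarrow> ren id h P = jbody (invQ Q0) \<Longrightarrow>
    eqv (invT (subT WVar \<tau> T)) (ren id h (ss P c (invT T)))"
  "\<And>\<tau> c Q0 h P. \<tau> c = KLam Q0 \<Longrightarrow> (\<And>n. n \<noteq> c \<Longrightarrow> \<tau> n = KVar (h n)) \<Longrightarrow> jhd (invQ Q0) = h c
    \<Longrightarrow> ren id h P = jbody (invQ Q0) \<Longrightarrow>
    eqvJ (invQ (subQ WVar \<tau> Q)) (renJ id h (ssJ P c (invQ Q)))"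
  "\<And>\<tau> c Q0 h P. \<tau> c = KLam Q0 \<Longrightarrow> (\<And>n. n \<noteq> c \<Longrightarrow> \<tau> n = KVar (h n)) \<Longrightarrow> jhd (invQ Q0) = h c
    \<Longrightarrow> ren id h P = jbody (invQ Q0) \<Longrightarrow>
    eqv (invW (subW WVar \<tau> W)) (ren id h (ss P c (invW W)))"
  "\<And>\<tau> c Q0 h P X X'. \<tau> c = KLam Q0 \<Longrightarrow> (\<And>n. n \<noteq> c \<Longrightarrow> \<tau> n = KVar (h n)) \<Longrightarrow> jhd (invQ Q0) = h c
    \<Longrightarrow> ren id h P = jbody (invQ Q0) \<Longrightarrow> eqv X' (ren id h (ss P c X)) \<Longrightarrow>
    eqvJ (invK (subK WVar \<tau> K) X') (renJ id h (ssJ P c (invK K X)))"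
proof (induction T and Q and W and K)
  case (TLamK Q)
  have "renW id Suc \<circ> WVar = WVar" by (rule ext) simp
  have a: "liftK \<tau> (Suc c) = KLam (renQ id Suc Q0)" using TLamK(2) by simp
  have b: "\<And>n. n \<noteq> Suc c \<Longrightarrow> liftK \<tau> n = KVar (lift h n)"
    using TLamK(3) by (case_tac n) auto
  have c: "jhd (invQ (renQ id Suc Q0)) = lift h (Suc c)" using TLamK(4) by (simp add: inv_ren)
  have d: "ren id (lift h) (ren id Suc P) = jbody (invQ (renQ id Suc Q0))"
  proof -
    have "ren id (lift h) (ren id Suc P) = ren id Suc (ren id h P)" by (rule ren_comm2)
    also have "\<dots> = ren id Suc (jbody (invQ Q0))" by (metis TLamK(5))
    finally show ?thesis by (simp add: inv_ren)
  qed
  have "eqvJ (invQ (subQ WVar (liftK \<tau>) Q)) (renJ id (lift h) (ssJ (ren id Suc P) (Suc c) (invQ Q)))"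
    by (rule TLamK(1)[OF a b c d])
  then show ?case by (simp add: comp_def id_def eqv_eqvJ.c_mu)
next
  case (TApp a b)
  then show ?case
    by simp (meson eqv_eqvJ.c_app1 eqv_eqvJ.c_app2 eqv_eqvJ.trans)
next
  case (QK K W)
  then show ?case by simp
next
  case (QT T K)
  then show ?case by simp
next
  case (WVar n)
  then show ?case by (simp add: eqv_eqvJ.refl)
next
  case (WLam T)
  have a: "(renK Suc id \<circ> \<tau>) c = KLam (renQ (lift Suc) id Q0)" using WLam(2) by simp
  have b: "\<And>n. n \<noteq> c \<Longrightarrow> (renK Suc id \<circ> \<tau>) n = KVar (h n)"
    using WLam(3) by simp
  have c: "jhd (invQ (renQ (lift Suc) id Q0)) = h c" using WLam(4) by (simp add: inv_ren)
  have d: "ren id h (ren (lift Suc) id P) = jbody (invQ (renQ (lift Suc) id Q0))"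
  proof -
    have "ren id h (ren (lift Suc) id P) = ren (lift Suc) id (ren id h P)" by (rule ren_comm3[symmetric])
    also have "\<dots> = ren (lift Suc) id (jbody (invQ Q0))" by (metis WLam(5))
    finally show ?thesis by (simp add: inv_ren)
  qed
  have "eqv (invT (subT WVar (renK Suc id \<circ> \<tau>) T)) (ren id h (ss (ren (lift Suc) id P) c (invT T)))"
    by (rule WLam(1)[OF a b c d])
  then show ?case by (simp add: comp_def id_def eqv_eqvJ.c_lam)
next
  case (KVar n)
  show ?case
  proof (cases "n = c")
    case True
    have "eqvJ (invK (KLam Q0) X') (Jmp (h c) (Where (jbody (invQ Q0)) X'))"
      using JWhere_flat[of "invQ Q0" X'] KVar(3) by simp
    also have "eqvJ \<dots> (Jmp (h c) (Where (jbody (invQ Q0)) (ren id h (ss P c X))))"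
      using KVar(5) by (intro eqv_eqvJ.c_jmp eqv_eqvJ.c_wh2)
    finally show ?thesis using True KVar(1,4) by (simp add: id_def)
  next
    case False
    then show ?thesis using KVar by (simp add: eqv_eqvJ.c_jmp id_def)
  qed
next
  case (KLam Q)
  have a: "(renK Suc id \<circ> \<tau>) c = KLam (renQ (lift Suc) id Q0)" using KLam(2) by simp
  have b: "\<And>n. n \<noteq> c \<Longrightarrow> (renK Suc id \<circ> \<tau>) n = KVar (h n)"
    using KLam(3) by simp
  have c: "jhd (invQ (renQ (lift Suc) id Q0)) = h c" using KLam(4) by (simp add: inv_ren)
  have d: "ren id h (ren (lift Suc) id P) = jbody (invQ (renQ (lift Suc) id Q0))"
  proof -
    have "ren id h (ren (lift Suc) id P) = ren (lift Suc) id (ren id h P)" by (rule ren_comm3[symmetric])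
    also have "\<dots> = ren (lift Suc) id (jbody (invQ Q0))" by (metis KLam(5))
    finally show ?thesis by (simp add: inv_ren)
  qed
  have "eqvJ (invQ (subQ WVar (renK Suc id \<circ> \<tau>) Q)) (renJ id h (ssJ (ren (lift Suc) id P) c (invQ Q)))"
    by (rule KLam(1)[OF a b c d])
  then show ?case using KLam(6)
    by (simp add: comp_def id_def) (meson eqv_eqvJ.c_jwh1 eqv_eqvJ.c_jwh2 eqv_eqvJ.transJ)
qed




declare eqv_eqvJ.trans[trans] eqv_eqvJ.transJ[trans]

lemma is_val_invW[simp]: "is_val (invW W)"
  by (cases W) auto

lemma ss_flat: "eqvJ (ssJ P c J) (ssJ P c (Jmp (jhd J) (jbody J)))"
proof (induction J arbitrary: P rule: jhd.induct)
  case (1 k M)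
  then show ?case by (simp add: eqv_eqvJ.reflJ)
next
  case (2 J M)
  let ?P = "ren (lift Suc) id P"
  have ih: "eqvJ (ssJ ?P c J) (ssJ ?P c (Jmp (jhd J) (jbody J)))" by (rule 2)
  show ?case
  proof (cases "jhd J = c")
    case True
    have "eqvJ (ssJ P c (JWhere J M)) (JWhere (Jmp c (Where ?P (ss ?P c (jbody J)))) (ss P c M))"
      using ih True by (simp add: eqv_eqvJ.c_jwh1)
    also have "eqvJ \<dots> (Jmp c (Where (Where ?P (ss ?P c (jbody J))) (ss P c M)))"
      by (rule eqv_eqvJ.symJ) (rule eqv_eqvJ.E3)
    also have "eqvJ \<dots> (Jmp c (Where P (Where (ss ?P c (jbody J)) (ss P c M))))"
      by (rule eqv_eqvJ.c_jmp) (rule eqv_eqvJ.sym, rule eqv_eqvJ.E1)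
    finally show ?thesis using True by simp
  next
    case False
    have "eqvJ (ssJ P c (JWhere J M)) (JWhere (Jmp (jhd J) (ss ?P c (jbody J))) (ss P c M))"
      using ih False by (simp add: eqv_eqvJ.c_jwh1)
    also have "eqvJ \<dots> (Jmp (jhd J) (Where (ss ?P c (jbody J)) (ss P c M)))"
      by (rule eqv_eqvJ.symJ) (rule eqv_eqvJ.E3)
    finally show ?thesis using False by simp
  qed
qed

lemma red_invK: "ccv_red (vn M) (vn M') \<Longrightarrow> ccv_redJ (vnJ (invK K M)) (vnJ (invK K M'))"
  by (cases K) (auto intro: red_Jmp red_JWhere2)

lemma unshift_kcons: "0 \<notin> kfv L \<Longrightarrow> ren id (kcons l) L = unshift L"
proof -
  assume z: "0 \<notin> kfv L"
  have "ren id (kcons l) L = ren id (kcons l) (ren id Suc (unshift L))" using shift_unshift[OF z] by simp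
  also have "\<dots> = unshift L"
    by (simp add: ren_ren comp_def id_def[symmetric])
  finally show ?thesis .
qed

lemma kcons_shift[simp]: "ren id (kcons l) (ren id Suc L) = L"
  by (simp add: ren_ren comp_def id_def[symmetric])

lemma sim_betaW: "ccv_red (vn (invT (TApp (WLam T) W))) (vn (invT (subT (consW W) KVar T)))"
proof -
  let ?A = "invT T" and ?V = "invW W"
  have "ccv_red (vn (invT (TApp (WLam T) W))) (Where (vn ?A) (vn ?V))"
    by simp (rule top_red, rule top_t.beta_lam, simp)
  also have "ccv_red \<dots> (subst (cons1 (vn ?V)) (vn ?A))"
    by (rule top_red, rule top_t.beta_let, simp)
  also have "subst (cons1 (vn ?V)) (vn ?A) = vn (invT (subT (consW W) KVar T))"
  proof -
    have "invW \<circ> consW W = cons1 ?V" by (rule fun_eq_nat) simp_all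
    moreover have "vn \<circ> cons1 ?V = cons1 (vn ?V)" by (rule fun_eq_nat) simp_all
    ultimately show ?thesis by (simp add: inv_subst vn_subst)
  qed
  finally show ?thesis .
qed

lemma sim_betaQ: "ccv_redJ (vnJ (invQ (QK (KLam Q) W))) (vnJ (invQ (subQ (consW W) KVar Q)))"
proof -
  let ?J = "invQ Q" and ?V = "invW W"
  have "eqvJ (vnJ (invQ (QK (KLam Q) W))) (Jmp (jhd ?J) (Where (vn (jbody ?J)) (vn ?V)))"
    using JWhere_flat[of "vnJ ?J" "vn ?V"] by simp
  then have "ccv_redJ (vnJ (invQ (QK (KLam Q) W))) (Jmp (jhd ?J) (Where (vn (jbody ?J)) (vn ?V)))"
    by (rule eqvJ_red)
  also have "ccv_redJ \<dots> (Jmp (jhd ?J) (subst (cons1 (vn ?V)) (vn (jbody ?J))))"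
    by (rule red_Jmp, rule top_red, rule top_t.beta_let, simp)
  also have "ccv_redJ \<dots> (vnJ (invQ (subQ (consW W) KVar Q)))"
  proof -
    have "invW \<circ> consW W = cons1 ?V" by (rule fun_eq_nat) simp_all
    moreover have "vn \<circ> cons1 ?V = cons1 (vn ?V)" by (rule fun_eq_nat) simp_all
    ultimately have e: "vnJ (invQ (subQ (consW W) KVar Q)) = substJ (cons1 (vn ?V)) (vnJ ?J)"
      by (simp add: inv_subst vn_subst)
    show ?thesis unfolding e
      using eqv_flat[of "substJ (cons1 (vn ?V)) (vnJ ?J)"]
      by (intro eqvJ_red) (simp add: eqv_eqvJ.symJ)
  qed
  finally show ?thesis .
qed


lemma sim_betaK_var: "ccv_redJ (vnJ (invQ (QT (TLamK Q) (KVar l)))) (vnJ (invQ (subQ WVar (consK (KVar l)) Q)))"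
proof -
  let ?J = "vnJ (invQ Q)"
  have c: "consK (KVar l) = (\<lambda>n. KVar (kcons l n))" by (rule fun_eq_nat) simp_all
  have w: "WVar = (\<lambda>n. WVar (id n))" by simp
  have tgt: "vnJ (invQ (subQ WVar (consK (KVar l)) Q)) = renJ id (kcons l) ?J"
    by (subst c, subst w, simp only: subQ_ren inv_ren vn_ren)
  show ?thesis
  proof (cases "isred ?J")
    case True
    then have z: "jhd ?J = 0" "0 \<notin> kfv (jbody ?J)" by (auto simp: isred_def)
    have "eqvJ (renJ id (kcons l) ?J) (renJ id (kcons l) (Jmp (jhd ?J) (jbody ?J)))"
      by (rule eqv_ren, rule eqv_flat)
    then have "eqvJ (renJ id (kcons l) ?J) (Jmp l (unshift (jbody ?J)))"
      using z unshift_kcons[OF z(2), of l] by simp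
    then show ?thesis using True unfolding tgt
      by (simp add: vt_def eqvJ_red eqv_eqvJ.symJ)
  next
    case False
    then show ?thesis unfolding tgt
      by (simp add: vt_def topJ_red top_j.beta_jmp)
  qed
qed

lemma sim_betaK_lam: "ccv_redJ (vnJ (invQ (QT (TLamK Q) (KLam Q')))) (vnJ (invQ (subQ WVar (consK (KLam Q')) Q)))"
proof -
  let ?J = "invQ Q" and ?J' = "invQ Q'"
  let ?k = "jhd ?J'" and ?L = "jbody ?J'"
  let ?P = "ren id Suc ?L"
  have "eqvJ (invQ (subQ WVar (consK (KLam Q')) Q)) (renJ id (kcons ?k) (ssJ ?P 0 ?J))"
  proof (rule hard(2)[of "consK (KLam Q')" 0 Q' "kcons ?k" ?P])
    fix n :: nat assume "n \<noteq> 0"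
    then show "consK (KLam Q') n = KVar (kcons ?k n)" by (cases n) auto
  qed simp_all
  then have tgt: "eqvJ (vnJ (invQ (subQ WVar (consK (KLam Q')) Q)))
                       (renJ id (kcons ?k) (ssJ (ren id Suc (vn ?L)) 0 (vnJ ?J)))"
    by (metis vn_eqv(2) vn_ren(1,2) vn_ss(2))
  let ?Jv = "vnJ ?J"
  have src: "eqvJ (vnJ (invQ (QT (TLamK Q) (KLam Q')))) (Jmp ?k (Where (vn ?L) (vt ?Jv)))"
    using JWhere_flat[of "vnJ ?J'" "vt ?Jv"] by simp
  show ?thesis
  proof (cases "isred ?Jv")
    case True
    then have z: "jhd ?Jv = 0" "0 \<notin> kfv (jbody ?Jv)" unfolding isred_def by blast+
    have "eqvJ (renJ id (kcons ?k) (ssJ (ren id Suc (vn ?L)) 0 ?Jv))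
               (renJ id (kcons ?k) (ssJ (ren id Suc (vn ?L)) 0 (Jmp 0 (jbody ?Jv))))"
      using eqv_ren(2)[OF ss_flat[of "ren id Suc (vn ?L)" 0 ?Jv, unfolded z(1)], of id "kcons ?k"] .
    also have "renJ id (kcons ?k) (ssJ (ren id Suc (vn ?L)) 0 (Jmp 0 (jbody ?Jv)))
             = Jmp ?k (Where (vn ?L) (vt ?Jv))"
      using z True by (simp add: ss_nofree vt_def unshift_kcons id_def[symmetric])
    finally have "eqvJ (vnJ (invQ (subQ WVar (consK (KLam Q')) Q))) (Jmp ?k (Where (vn ?L) (vt ?Jv)))"
      using tgt by (rule eqv_eqvJ.transJ[rotated])
    then show ?thesis using src by (meson eqvJ_red eqv_eqvJ.symJ eqv_eqvJ.transJ)
  next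
    case False
    have "ccv_redJ (vnJ (invQ (QT (TLamK Q) (KLam Q')))) (Jmp ?k (Where (vn ?L) (Mu ?Jv)))"
      using src False by (simp add: vt_def eqvJ_red)
    also have "ccv_redJ \<dots> (Jmp ?k (Mu (ssJ (ren id Suc (vn ?L)) 0 ?Jv)))"
      by (rule red_Jmp, rule top_red, rule top_t.beta_mu)
    also have "ccv_redJ \<dots> (renJ id (kcons ?k) (ssJ (ren id Suc (vn ?L)) 0 ?Jv))"
      by (rule topJ_red, rule top_j.beta_jmp)
    also have "ccv_redJ \<dots> (vnJ (invQ (subQ WVar (consK (KLam Q')) Q)))"
      using tgt by (simp add: eqvJ_red eqv_eqvJ.symJ)
    finally show ?thesis .
  qed
qed

lemma sim_etaW: "ccv_red (vn (invW (WLam (TApp (renW Suc id W) (WVar 0))))) (vn (invW W))"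
  by (simp add: inv_ren vn_ren) (rule top_red, rule top_t.eta_lam, simp)

lemma sim_etaT: "ccv_red (vn (invT (TLamK (QT (renT id Suc T) (KVar 0))))) (vn (invT T))"
  by (simp add: inv_ren vn_ren vt_def isred_def)

lemma sim_etaK: "ccv_redJ (vnJ (invK (KLam (QK (renK Suc id K) (WVar 0))) X)) (vnJ (invK K X))"
proof (cases K)
  case (KVar k)
  have "ccv_redJ (vnJ (invK (KLam (QK (renK Suc id K) (WVar 0))) X)) (Jmp k (Where (Var 0) (vn X)))"
    using KVar by (simp add: eqvJ_red eqv_eqvJ.symJ eqv_eqvJ.E3)
  also have "ccv_redJ \<dots> (Jmp k (vn X))"
    by (rule red_Jmp, rule top_red, rule top_t.eta_let)
  finally show ?thesis using KVar by simp
next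
  case (KLam Q)
  let ?J = "vnJ (invQ Q)"
  let ?k = "jhd ?J" and ?L = "jbody ?J"
  have "vnJ (invK (KLam (QK (renK Suc id K) (WVar 0))) X)
        = JWhere (JWhere (renJ (lift Suc) id ?J) (Var 0)) (vn X)"
    using KLam by (simp add: inv_ren vn_ren)
  also have "eqvJ \<dots> (Jmp ?k (Where (Where (ren (lift Suc) id ?L) (Var 0)) (vn X)))"
    using JWhere_flat[of "JWhere (renJ (lift Suc) id ?J) (Var 0)" "vn X"] by simp
  finally have "ccv_redJ (vnJ (invK (KLam (QK (renK Suc id K) (WVar 0))) X))
     (Jmp ?k (Where (Where (ren (lift Suc) id ?L) (Var 0)) (vn X)))" by (rule eqvJ_red)
  also have "ccv_redJ \<dots> (Jmp ?k (Where (subst (cons1 (Var 0)) (ren (lift Suc) id ?L)) (vn X)))"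
    by (rule red_Jmp, rule red_Where1, rule top_red, rule top_t.beta_let, simp)
  also have "subst (cons1 (Var 0)) (ren (lift Suc) id ?L) = ?L"
  proof -
    have "cons1 (Var 0) \<circ> lift Suc = Var" by (rule fun_eq_nat) simp_all
    then show ?thesis by (simp add: subst_ren_ord)
  qed
  also have "ccv_redJ (Jmp ?k (Where ?L (vn X))) (vnJ (invK K X))"
    using KLam JWhere_flat[of ?J "vn X"] by (simp add: eqvJ_red eqv_eqvJ.symJ)
  finally show ?thesis .
qed


lemma sim:
  "stT T T' \<Longrightarrow> ccv_red (vn (invT T)) (vn (invT T'))"
  "stQ Q Q' \<Longrightarrow> ccv_redJ (vnJ (invQ Q)) (vnJ (invQ Q'))"
  "stW W W' \<Longrightarrow> ccv_red (vn (invW W)) (vn (invW W'))"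
  "stK K K' \<Longrightarrow> (\<forall>X. ccv_redJ (vnJ (invK K X)) (vnJ (invK K' X)))"
proof (induction rule: stT_stQ_stW_stK.inducts)
  case (betaW T W)
  then show ?case by (rule sim_betaW)
next
  case (betaK Q K)
  then show ?case by (cases K) (simp_all only: sim_betaK_var sim_betaK_lam)
next
  case (betaQ Q W)
  then show ?case by (rule sim_betaQ)
next
  case (etaW W)
  then show ?case by (rule sim_etaW)
next
  case (etaT T)
  then show ?case by (rule sim_etaT)
next
  case (etaK K)
  then show ?case using sim_etaK by blast
next
  case (cT_lam Q Q')
  then show ?case by (simp add: vt_mono)
next
  case (cT_app1 a a' b)
  then show ?case by (simp add: red_App1)
next
  case (cT_app2 b b' a)
  then show ?case by (simp add: red_App2)
next
  case (cQ_K1 K K' W)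
  then show ?case by simp
next
  case (cQ_K2 W W' K)
  then show ?case by (simp add: red_invK)
next
  case (cQ_T1 T T' K)
  then show ?case by (simp add: red_invK)
next
  case (cQ_T2 K K' T)
  then show ?case by simp
next
  case (cW_lam T T')
  then show ?case by (simp add: red_Lam)
next
  case (cK_lam Q Q')
  then show ?case by (simp add: red_JWhere1)
qed

lemma sim_star: "stT\<^sup>*\<^sup>* T T' \<Longrightarrow> ccv_red (vn (invT T)) (vn (invT T'))"
proof (induction rule: rtranclp_induct)
  case (step y z)
  then show ?case using sim(1) ccv_red_trans by blast
qed simp




declare eqv_eqvJ.trans[trans] eqv_eqvJ.transJ[trans]

lemma red_kfv: "ccv_red A B \<Longrightarrow> kfv B \<subseteq> kfv A"
  unfolding ccv_red_def
proof (induction rule: rtranclp_induct)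
  case (step y z)
  from step(2) have "kfv z \<subseteq> kfv y"
  proof
    assume "eqv y z" then show ?thesis by (simp add: eqv_kfv)
  next
    assume "ccv_step y z"
    then obtain A B where "eqv y A" "cs A B" "eqv B z" by (auto simp: ccv_step_def)
    then show ?thesis by (metis cs_kfv(1) eqv_kfv(1))
  qed
  with step(3) show ?case by blast
qed simp

lemma renT_renT:
  "renT f g (renT f' g' T) = renT (f \<circ> f') (g \<circ> g') T"
  "renQ f g (renQ f' g' Q) = renQ (f \<circ> f') (g \<circ> g') Q"
  "renW f g (renW f' g' W) = renW (f \<circ> f') (g \<circ> g') W"
  "renK f g (renK f' g' K) = renK (f \<circ> f') (g \<circ> g') K"
  by (induction T and Q and W and K arbitrary: f g f' g' and f g f' g' and f g f' g' and f g f' g')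
     (simp_all add: lift_comp)

lemma vn_invK_cong: "eqv (vn X) (vn Y) \<Longrightarrow> eqvJ (vnJ (invK K X)) (vnJ (invK K Y))"
  by (cases K) (auto intro: eqv_eqvJ.c_jmp eqv_eqvJ.c_jwh2)

lemma KW: "eqvJ (JWhere (invK (renK Suc id K) Y) Z) (invK K (Where Y Z))"
proof (cases K)
  case (KVar k)
  then show ?thesis by (simp add: eqv_eqvJ.symJ eqv_eqvJ.E3)
next
  case (KLam Q)
  let ?J = "invQ Q"
  have "invK (renK Suc id K) Y = JWhere (renJ (lift Suc) id ?J) Y"
    using KLam by (simp add: inv_ren)
  then have "eqvJ (JWhere (invK (renK Suc id K) Y) Z)
      (Jmp (jhd ?J) (Where (Where (ren (lift Suc) id (jbody ?J)) Y) Z))"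
    using JWhere_flat[of "JWhere (renJ (lift Suc) id ?J) Y" Z] by simp
  also have "eqvJ \<dots> (Jmp (jhd ?J) (Where (jbody ?J) (Where Y Z)))"
    by (rule eqv_eqvJ.c_jmp, rule eqv_eqvJ.sym, rule eqv_eqvJ.E1)
  also have "eqvJ \<dots> (invK K (Where Y Z))"
    using KLam JWhere_flat[of ?J "Where Y Z"] by (simp add: eqv_eqvJ.symJ)
  finally show ?thesis .
qed

lemma KWv: "eqvJ (JWhere (vnJ (invK (renK Suc id K) Y)) (vn Z)) (vnJ (invK K (Where Y Z)))"
  using vn_eqv(2)[OF KW[of K Y Z]] by simp

lemma cps_val: "is_val V \<Longrightarrow> cps fx fk V K = QK K (star fx fk V)"
  by (cases V) auto


lemma vt_Jmp0: "0 \<notin> kfv L \<Longrightarrow> vt (Jmp 0 L) = unshift L"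
  by (simp add: vt_def isred_def)

lemma star_lam:
  assumes IH: "\<And>fx fk K. \<exists>D. ccv_red (ren fx fk M) D \<and> eqvJ (vnJ (invQ (cps fx fk M K))) (vnJ (invK K D))"
  shows "\<exists>D. ccv_red (ren fx fk (Lam M)) D \<and> is_val D \<and> eqv (vn (invW (star fx fk (Lam M)))) (vn D)"
proof -
  obtain D0 where r0: "ccv_red (ren (lift fx) (Suc \<circ> fk) M) D0"
    and e0: "eqvJ (vnJ (invQ (cps (lift fx) (Suc \<circ> fk) M (KVar 0)))) (Jmp 0 (vn D0))"
    using IH[of "lift fx" "Suc \<circ> fk" "KVar 0"] by auto
  have sh: "ren (lift fx) (Suc \<circ> fk) M = ren id Suc (ren (lift fx) fk M)" by (simp add: ren_ren)
  have "0 \<notin> kfv D0" using red_kfv[OF r0] sh by auto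
  then have z: "0 \<notin> kfv (vn D0)" by simp
  let ?D = "Lam (unshift (vn D0))"
  have "ccv_red (unshift (ren (lift fx) (Suc \<circ> fk) M)) (unshift D0)"
    unfolding unshift_def by (rule red_ren[OF r0])
  then have "ccv_red (ren (lift fx) fk M) (unshift D0)" using sh by simp
  also have "ccv_red (unshift D0) (unshift (vn D0))"
    unfolding unshift_def by (rule red_ren, rule red_vn)
  finally have r: "ccv_red (ren fx fk (Lam M)) ?D" by (simp add: red_Lam)
  have "eqv (vt (vnJ (invQ (cps (lift fx) (Suc \<circ> fk) M (KVar 0))))) (vt (Jmp 0 (vn D0)))"
    by (rule vt_cong[OF e0])
  then have "eqv (vn (invW (star fx fk (Lam M)))) (Lam (unshift (vn D0)))"
    using z by (simp add: vt_Jmp0 eqv_eqvJ.c_lam)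
  moreover have "vn ?D = Lam (unshift (vn D0))"
    by (simp add: unshift_def vn_ren)
  ultimately show ?thesis using r by auto
qed

lemma cps_lem:
  "(\<forall>fx fk. is_val M \<longrightarrow> (\<exists>D. ccv_red (ren fx fk M) D \<and> is_val D \<and> eqv (vn (invW (star fx fk M))) (vn D)))
   \<and> (\<forall>fx fk K. \<exists>D. ccv_red (ren fx fk M) D \<and> eqvJ (vnJ (invQ (cps fx fk M K))) (vnJ (invK K D)))"
  "\<forall>fx fk. \<exists>D. ccv_redJ (renJ fx fk J) D \<and> eqvJ (vnJ (invQ (cpsJ fx fk J))) (vnJ D)"
proof (induction M and J)
  case (Var n)
  show ?case by (auto intro!: exI[of _ "Var _"] eqv_eqvJ.refl eqv_eqvJ.reflJ)
next
  case (Lam M)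
  have st: "\<And>fx fk. \<exists>D. ccv_red (ren fx fk (Lam M)) D \<and> is_val D \<and> eqv (vn (invW (star fx fk (Lam M)))) (vn D)"
    by (rule star_lam) (use Lam in blast)
  show ?case
  proof (intro conjI allI impI)
    fix fx fk show "\<exists>D. ccv_red (ren fx fk (Lam M)) D \<and> is_val D \<and> eqv (vn (invW (star fx fk (Lam M)))) (vn D)"
      by (rule st)
  next
    fix fx fk K
    obtain D where "ccv_red (ren fx fk (Lam M)) D" "eqv (vn (invW (star fx fk (Lam M)))) (vn D)"
      using st by blast
    then show "\<exists>D. ccv_red (ren fx fk (Lam M)) D \<and> eqvJ (vnJ (invQ (cps fx fk (Lam M) K))) (vnJ (invK K D))"
      using vn_invK_cong by (metis cps_val invQ.simps(1) is_val.simps(2))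
  qed
next
  case (App A B)
  show ?case
  proof (intro conjI allI impI)
    fix fx fk assume "is_val (App A B)" then show "\<exists>D. ccv_red (ren fx fk (App A B)) D \<and> is_val D \<and> eqv (vn (invW (star fx fk (App A B)))) (vn D)"
      by simp
  next
    fix fx fk K
    show "\<exists>D. ccv_red (ren fx fk (App A B)) D \<and> eqvJ (vnJ (invQ (cps fx fk (App A B) K))) (vnJ (invK K D))"
    proof -
      let ?A = "ren fx fk A" and ?B = "ren fx fk B"
      have shA: "ren Suc id ?A = ren (Suc \<circ> fx) fk A" and shB: "ren Suc id ?B = ren (Suc \<circ> fx) fk B"
        by (simp_all add: ren_ren)
      show ?thesis
      proof (cases "is_val A")
        case vA: True
        show ?thesis
        proof (cases "is_val B")
          case vB: True
          obtain DA where rA: "ccv_red ?A DA" and eA: "eqv (vn (invW (star fx fk A))) (vn DA)"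
            using App.IH(1)[THEN conjunct1] vA by blast
          obtain DB where rB: "ccv_red ?B DB" and eB: "eqv (vn (invW (star fx fk B))) (vn DB)"
            using App.IH(2)[THEN conjunct1] vB by blast
          have "eqv (App (vn (invW (star fx fk A))) (vn (invW (star fx fk B)))) (App (vn DA) (vn DB))"
            using eA eB by (meson eqv_eqvJ.c_app1 eqv_eqvJ.c_app2 eqv_eqvJ.trans)
          then have "eqvJ (vnJ (invQ (cps fx fk (App A B) K))) (vnJ (invK K (App DA DB)))"
            using vA vB vn_invK_cong[of "App (invW (star fx fk A)) (invW (star fx fk B))" "App DA DB" K]
            by simp
          moreover have "ccv_red (ren fx fk (App A B)) (App DA DB)"
            using rA rB by (simp add: ccv_red_trans[OF red_App1 red_App2])
          ultimately show ?thesis by blast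
        next
          case nB: False
          let ?K1 = "KLam (QT (TApp (star (Suc \<circ> fx) fk A) (WVar 0)) (renK Suc id K))"
          obtain DB where rB: "ccv_red ?B DB"
            and eB: "eqvJ (vnJ (invQ (cps fx fk B ?K1))) (vnJ (invK ?K1 DB))"
            using App.IH(2)[THEN conjunct2] by blast
          obtain DA where rA: "ccv_red (ren (Suc \<circ> fx) fk A) DA" and vDA: "is_val DA"
            and eA: "eqv (vn (invW (star (Suc \<circ> fx) fk A))) (vn DA)"
            using App.IH(1)[THEN conjunct1] vA by blast
          have "eqvJ (vnJ (invQ (cps fx fk (App A B) K))) (vnJ (invK ?K1 DB))"
            using vA nB eB by simp
          also have "vnJ (invK ?K1 DB) = JWhere (vnJ (invK (renK Suc id K) (App (invW (star (Suc \<circ> fx) fk A)) (Var 0)))) (vn DB)"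
            by simp
          also have "eqvJ \<dots> (JWhere (vnJ (invK (renK Suc id K) (App DA (Var 0)))) (vn DB))"
            by (rule eqv_eqvJ.c_jwh1, rule vn_invK_cong) (simp add: eA eqv_eqvJ.c_app1)
          also have "eqvJ \<dots> (vnJ (invK K (Where (App DA (Var 0)) DB)))" by (rule KWv)
          finally have e: "eqvJ (vnJ (invQ (cps fx fk (App A B) K))) (vnJ (invK K (Where (App DA (Var 0)) DB)))" .
          have "ccv_red (ren fx fk (App A B)) (Where (App (ren Suc id ?A) (Var 0)) ?B)"
            using vA nB by simp (rule top_red, rule top_t.ad2, simp_all)
          also have "ccv_red \<dots> (Where (App DA (Var 0)) ?B)"
            using rA shA by (simp add: red_Where1 red_App1)
          also have "ccv_red \<dots> (Where (App DA (Var 0)) DB)" using rB by (rule red_Where2)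
          finally show ?thesis using e by blast
        qed
      next
        case nA: False
        show ?thesis
        proof (cases "is_val B")
          case vB: True
          let ?K1 = "KLam (QT (TApp (WVar 0) (star (Suc \<circ> fx) fk B)) (renK Suc id K))"
          obtain DA where rA: "ccv_red ?A DA"
            and eA: "eqvJ (vnJ (invQ (cps fx fk A ?K1))) (vnJ (invK ?K1 DA))"
            using App.IH(1)[THEN conjunct2] by blast
          obtain DB where rB: "ccv_red (ren (Suc \<circ> fx) fk B) DB"
            and eB: "eqv (vn (invW (star (Suc \<circ> fx) fk B))) (vn DB)"
            using App.IH(2)[THEN conjunct1] vB by blast
          have "eqvJ (vnJ (invQ (cps fx fk (App A B) K))) (vnJ (invK ?K1 DA))"
            using nA vB eA by simp
          also have "vnJ (invK ?K1 DA) = JWhere (vnJ (invK (renK Suc id K) (App (Var 0) (invW (star (Suc \<circ> fx) fk B))))) (vn DA)"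
            by simp
          also have "eqvJ \<dots> (JWhere (vnJ (invK (renK Suc id K) (App (Var 0) DB))) (vn DA))"
            by (rule eqv_eqvJ.c_jwh1, rule vn_invK_cong) (simp add: eB eqv_eqvJ.c_app2)
          also have "eqvJ \<dots> (vnJ (invK K (Where (App (Var 0) DB) DA)))" by (rule KWv)
          finally have e: "eqvJ (vnJ (invQ (cps fx fk (App A B) K))) (vnJ (invK K (Where (App (Var 0) DB) DA)))" .
          have "ccv_red (ren fx fk (App A B)) (Where (App (Var 0) (ren Suc id ?B)) ?A)"
            using nA by simp (rule top_red, rule top_t.ad1, simp)
          also have "ccv_red \<dots> (Where (App (Var 0) DB) ?A)"
            using rB shB by (simp add: red_Where1 red_App2)
          also have "ccv_red \<dots> (Where (App (Var 0) DB) DA)" using rA by (rule red_Where2)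
          finally show ?thesis using e by blast
        next
          case nB: False
          let ?K2 = "KLam (QT (TApp (WVar 1) (WVar 0)) (renK (Suc \<circ> Suc) id K))"
          let ?K1 = "KLam (cps (Suc \<circ> fx) fk B ?K2)"
          obtain DA where rA: "ccv_red ?A DA"
            and eA: "eqvJ (vnJ (invQ (cps fx fk A ?K1))) (vnJ (invK ?K1 DA))"
            using App.IH(1)[THEN conjunct2] by blast
          obtain DB where rB: "ccv_red (ren (Suc \<circ> fx) fk B) DB"
            and eB: "eqvJ (vnJ (invQ (cps (Suc \<circ> fx) fk B ?K2))) (vnJ (invK ?K2 DB))"
            using App.IH(2)[THEN conjunct2] by blast
          have kk: "renK (Suc \<circ> Suc) id K = renK Suc id (renK Suc id K)"
            by (simp add: renT_renT)
          have "eqvJ (vnJ (invQ (cps fx fk (App A B) K))) (vnJ (invK ?K1 DA))"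
            using nA nB eA by simp
          also have "vnJ (invK ?K1 DA) = JWhere (vnJ (invQ (cps (Suc \<circ> fx) fk B ?K2))) (vn DA)"
            by simp
          also have "eqvJ \<dots> (JWhere (vnJ (invK ?K2 DB)) (vn DA))"
            using eB by (rule eqv_eqvJ.c_jwh1)
          also have "vnJ (invK ?K2 DB) = JWhere (vnJ (invK (renK Suc id (renK Suc id K)) (App (Var 1) (Var 0)))) (vn DB)"
            using kk by simp
          also have "eqvJ (JWhere \<dots> (vn DA)) (JWhere (vnJ (invK (renK Suc id K) (Where (App (Var 1) (Var 0)) DB))) (vn DA))"
            by (rule eqv_eqvJ.c_jwh1, rule KWv)
          also have "eqvJ \<dots> (vnJ (invK K (Where (Where (App (Var 1) (Var 0)) DB) DA)))" by (rule KWv)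
          finally have e: "eqvJ (vnJ (invQ (cps fx fk (App A B) K))) (vnJ (invK K (Where (Where (App (Var 1) (Var 0)) DB) DA)))" .
          have "ccv_red (ren fx fk (App A B)) (Where (App (Var 0) (ren Suc id ?B)) ?A)"
            using nA by simp (rule top_red, rule top_t.ad1, simp)
          also have "ccv_red \<dots> (Where (Where (App (Var 1) (Var 0)) (ren Suc id ?B)) ?A)"
            using nB top_t.ad2[of "Var 0" "ren Suc id ?B"] by (simp add: red_Where1 top_red)
          also have "ccv_red \<dots> (Where (Where (App (Var 1) (Var 0)) DB) ?A)"
            using rB shB by (simp add: red_Where1 red_Where2)
          also have "ccv_red \<dots> (Where (Where (App (Var 1) (Var 0)) DB) DA)" using rA by (rule red_Where2)
          finally show ?thesis using e by blast
        qed
      qed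
    qed
  qed
next
  case (Where L M)
  show ?case
  proof (intro conjI allI impI)
    fix fx fk assume "is_val (Where L M)" then show "\<exists>D. ccv_red (ren fx fk (Where L M)) D \<and> is_val D \<and> eqv (vn (invW (star fx fk (Where L M)))) (vn D)"
      by simp
  next
    fix fx fk K
    obtain DM where rM: "ccv_red (ren fx fk M) DM"
      and eM: "eqvJ (vnJ (invQ (cps fx fk M (KLam (cps (lift fx) fk L (renK Suc id K))))))
                    (vnJ (invK (KLam (cps (lift fx) fk L (renK Suc id K))) DM))"
      using Where.IH(2) by blast
    obtain DL where rL: "ccv_red (ren (lift fx) fk L) DL"
      and eL: "eqvJ (vnJ (invQ (cps (lift fx) fk L (renK Suc id K)))) (vnJ (invK (renK Suc id K) DL))"
      using Where.IH(1) by blast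
    have "eqvJ (vnJ (invQ (cps fx fk (Where L M) K)))
               (JWhere (vnJ (invQ (cps (lift fx) fk L (renK Suc id K)))) (vn DM))"
      using eM by simp
    also have "eqvJ \<dots> (JWhere (vnJ (invK (renK Suc id K) DL)) (vn DM))"
      using eL by (rule eqv_eqvJ.c_jwh1)
    also have "eqvJ \<dots> (vnJ (invK K (Where DL DM)))" by (rule KWv)
    finally have e: "eqvJ (vnJ (invQ (cps fx fk (Where L M) K))) (vnJ (invK K (Where DL DM)))" .
    have "ccv_red (ren fx fk (Where L M)) (Where DL DM)"
      using rL rM by (simp add: red_Where1 red_Where2 ccv_red_trans[OF red_Where1 red_Where2])
    with e show "\<exists>D. ccv_red (ren fx fk (Where L M)) D \<and> eqvJ (vnJ (invQ (cps fx fk (Where L M) K))) (vnJ (invK K D))"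
      by blast
  qed
next
  case (Mu J)
  show ?case
  proof (intro conjI allI impI)
    fix fx fk assume "is_val (Mu J)" then show "\<exists>D. ccv_red (ren fx fk (Mu J)) D \<and> is_val D \<and> eqv (vn (invW (star fx fk (Mu J)))) (vn D)"
      by simp
  next
    fix fx fk K
    obtain DJ where r: "ccv_redJ (renJ fx (lift fk) J) DJ"
      and e: "eqvJ (vnJ (invQ (cpsJ fx (lift fk) J))) (vnJ DJ)"
      using Mu.IH by blast
    have "eqv (vn (Mu (invQ (cpsJ fx (lift fk) J)))) (vn (Mu DJ))"
      using vt_cong[OF e] by simp
    then have "eqvJ (vnJ (invQ (cps fx fk (Mu J) K))) (vnJ (invK K (Mu DJ)))"
      using vn_invK_cong by simp
    moreover have "ccv_red (ren fx fk (Mu J)) (Mu DJ)" using r by (simp add: red_Mu)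
    ultimately show "\<exists>D. ccv_red (ren fx fk (Mu J)) D \<and> eqvJ (vnJ (invQ (cps fx fk (Mu J) K))) (vnJ (invK K D))"
      by blast
  qed
next
  case (Jmp k M)
  show ?case
  proof (intro allI)
    fix fx fk
    obtain DM where r: "ccv_red (ren fx fk M) DM"
      and e: "eqvJ (vnJ (invQ (cps fx fk M (KVar (fk k))))) (vnJ (invK (KVar (fk k)) DM))"
      using Jmp.IH by blast
    then show "\<exists>D. ccv_redJ (renJ fx fk (Jmp k M)) D \<and> eqvJ (vnJ (invQ (cpsJ fx fk (Jmp k M)))) (vnJ D)"
      by (intro exI[of _ "Jmp (fk k) DM"]) (simp add: red_Jmp)
  qed
next
  case (JWhere J M)
  show ?case
  proof (intro allI)
    fix fx fk
    obtain DM where rM: "ccv_red (ren fx fk M) DM"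
      and eM: "eqvJ (vnJ (invQ (cps fx fk M (KLam (cpsJ (lift fx) fk J))))) (vnJ (invK (KLam (cpsJ (lift fx) fk J)) DM))"
      using JWhere.IH(2) by blast
    obtain DJ where rJ: "ccv_redJ (renJ (lift fx) fk J) DJ"
      and eJ: "eqvJ (vnJ (invQ (cpsJ (lift fx) fk J))) (vnJ DJ)"
      using JWhere.IH(1) by blast
    have "eqvJ (vnJ (invQ (cpsJ fx fk (JWhere J M)))) (JWhere (vnJ (invQ (cpsJ (lift fx) fk J))) (vn DM))"
      using eM by simp
    also have "eqvJ \<dots> (vnJ (JWhere DJ DM))" using eJ by (simp add: eqv_eqvJ.c_jwh1)
    finally have e: "eqvJ (vnJ (invQ (cpsJ fx fk (JWhere J M)))) (vnJ (JWhere DJ DM))" .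
    have "ccv_redJ (renJ fx fk (JWhere J M)) (JWhere DJ DM)"
      using rJ rM by (simp add: ccv_redJ_trans[OF red_JWhere1 red_JWhere2])
    with e show "\<exists>D. ccv_redJ (renJ fx fk (JWhere J M)) D \<and> eqvJ (vnJ (invQ (cpsJ fx fk (JWhere J M)))) (vnJ D)"
      by blast
  qed
qed




theorem theorem1p34:
  fixes M :: trm and N :: tT
  assumes "stT\<^sup>*\<^sup>* (CPS M) N"
  shows "\<forall>P. vert_nf (invT N) P \<longrightarrow> ccv_red M P"
proof (intro allI impI)
  fix P assume nf: "vert_nf (invT N) P"
  obtain D where rD: "ccv_red (ren id Suc M) D"
    and eD: "eqvJ (vnJ (invQ (cps id Suc M (KVar 0)))) (vnJ (invK (KVar 0) D))"
    using cps_lem(1)[of M] by blast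
  have "0 \<notin> kfv D" using red_kfv[OF rD] by (auto simp: kfv_ren)
  then have z: "0 \<notin> kfv (vn D)" by simp
  have "eqv (vn (invT (CPS M))) (vt (Jmp 0 (vn D)))"
    using vt_cong[OF eD] by (simp add: CPS_def)
  then have e1: "eqv (vn (invT (CPS M))) (unshift (vn D))" using z by (simp add: vt_Jmp0)
  have "ccv_red (unshift (ren id Suc M)) (unshift D)"
    unfolding unshift_def by (rule red_ren[OF rD])
  then have "ccv_red M (unshift D)" by simp
  also have "ccv_red (unshift D) (unshift (vn D))"
    unfolding unshift_def by (rule red_ren, rule red_vn)
  also have "ccv_red (unshift (vn D)) (vn (invT (CPS M)))"
    by (rule eqv_red, rule eqv_eqvJ.sym, rule e1)
  also have "ccv_red (vn (invT (CPS M))) (vn (invT N))"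
    by (rule sim_star[OF assms])
  also have "ccv_red (vn (invT N)) P"
    by (rule eqv_red, rule eqv_eqvJ.sym, rule vert_nf_vn[OF nf])
  finally show "ccv_red M P" .
qed



end
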